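(* Let $G=(V,q)$ be a reversible connected graph with non-negative Ollivier curvature, and let $\widetilde G=(V\times V,\widetilde q)$ be a perfect coupling graph of $G$ with Laplacian $\widetilde\Delta$. Define $u_t:V\times V\to[0,1]$ by $u_t(x,y):=\phi_t(d(x,y))$. Then $\partial_tu_t\ge\widetilde\Delta u_t$ on $V\times V$ for all $t>0$.
   Context: A graph $G=(V,q)$ consists of a countable set $V$ and a function $q:V\times V\to[0,\infty)$ such that $\#\{y:q(x,y)>0\}<\infty$ for every $x\in V$; its Laplacian is $\Delta f(x)=\sum_y q(x,y)(f(y)-f(x))$. $G$ is reversible if there is $m:V\to(0,\infty)$ with $q(x,y)m(x)=q(y,x)m(y)$. For reversible $G$, $x\sim y$ means $q(x,y)>0$ and $d$ is the combinatorial graph distance (finite since $G$ is connected). $q_{\min}:=\inf\{q(x,y):q(x,y)>0\}$. Ollivier curvature: for $x\ne y$ and $f:V\to\mathbb R$ let $\nabla_{xy}f=(f(x)-f(y))/d(x,y)$, $\|\nabla f\|_\infty=\sup_{x\ne y}|\nabla_{xy}f|$, and $\kappa(x,y)=\inf\{\nabla_{xy}\Delta f:\ \|\nabla f\|_\infty=1,\ \nabla_{yx}f=1\}$. Non-negative Ollivier curvature means $\kappa(x,y)\ge0$ for all $x\ne y$. $(f\otimes g)(x,y)=f(x)g(y)$. A graph $\widetilde G=(V\times V,\widetilde q)$ with Laplacian $\widetilde\Delta$ is a coupling graph of $G$ if $\widetilde\Delta(f\otimes 1)=\Delta f\otimes 1$ and $\widetilde\Delta(1\otimes f)=1\otimes\Delta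 f$ for all $f$. A transport plan from $x_0$ to $y_0$ is $\rho:V\times V\to[0,\infty)$ with $\sum_{y}\rho(x,y)=q(x_0,x)$ for $x\neq x_0$ and $\sum_x\rho(x,y)=q(y_0,y)$ for $y\ne y_0$; $\mathrm{cost}(\rho)=\sum_{x,y}\rho(x,y)(d(x_0,y_0)-d(x,y))$; $\mu_\rho(k)=\sum_{d(x,y)-d(x_0,y_0)=k}\rho(x,y)$; $\rho$ is optimal if it maximizes cost. A coupling graph is perfect if for all $x_0,y_0$ the plan $\rho_{x_0y_0}:=\widetilde q((x_0,y_0),(\cdot,\cdot))$ is optimal, has $\mu_{\rho_{x_0y_0}}(k)=0$ for $|k|>1$, and has $\mu_{\rho_{x_0y_0}}(-1)\ge 2q_{\min}$ when $x_0\ne y_0$. $\phi_t(n):=P^{\mathbb N_0}_t1_{\mathbb N_+}(n)$, where $P^{\mathbb N_0}_t$ is the heat semigroup (minimal, defined by finite-set exhaustion) of the graph on $\mathbb N_0$ with rates $q_0(x,y)=2q_{\min}$ if $|x-y|=1$ and $x>0$, and $0$ otherwise. *)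

theory Defs
  imports "HOL-Analysis.Analysis"
begin

(* A graph on the vertex type 'a (V = UNIV) with weights q *)
definition is_graph :: "('a \<Rightarrow> 'a \<Rightarrow> real) \<Rightarrow> bool" where
  "is_graph q \<longleftrightarrow> countable (UNIV :: 'a set) \<and> (\<forall>x y. q x y \<ge> 0) \<and> (\<forall>x. finite {y. q x y > 0})"

definition laplacian :: "('a \<Rightarrow> 'a \<Rightarrow> real) \<Rightarrow> ('a \<Rightarrow> real) \<Rightarrow> 'a \<Rightarrow> real" where
  "laplacian q f x = (\<Sum>y\<in>{y. q x y > 0}. q x y * (f y - f x))"

definition reversible :: "('a \<Rightarrow> 'a \<Rightarrow> real) \<Rightarrow> bool" where
  "reversible q \<longleftrightarrow> (\<exists>m :: 'a \<Rightarrow> real. (\<forall>x. m x > 0) \<and> (\<forall>x y. q x y * m x = q y x * m y))"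

definition edges :: "('a \<Rightarrow> 'a \<Rightarrow> real) \<Rightarrow> ('a \<times> 'a) set" where
  "edges q = {(x, y). q x y > 0}"

definition connected_graph :: "('a \<Rightarrow> 'a \<Rightarrow> real) \<Rightarrow> bool" where
  "connected_graph q \<longleftrightarrow> (\<forall>x y. (x, y) \<in> (edges q)\<^sup>*)"

definition gdist :: "('a \<Rightarrow> 'a \<Rightarrow> real) \<Rightarrow> 'a \<Rightarrow> 'a \<Rightarrow> nat" where
  "gdist q x y = (LEAST n. (x, y) \<in> (edges q) ^^ n)"

definition qmin :: "('a \<Rightarrow> 'a \<Rightarrow> real) \<Rightarrow> real" where
  "qmin q = Inf {q x y | x y. q x y > 0}"

definition grad :: "('a \<Rightarrow> 'a \<Rightarrow> real) \<Rightarrow> 'a \<Rightarrow> 'a \<Rightarrow> ('a \<Rightarrow> real) \<Rightarrow> real" where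
  "grad q x y f = (f x - f y) / real (gdist q x y)"

(* \<parallel>\<nabla>f\<parallel>_\<infinity> = 1 together with \<nabla>_{yx} f = 1 is expressed as:
   |\<nabla>_{ab} f| \<le> 1 for all a \<noteq> b, and \<nabla>_{yx} f = 1 (so the sup equals 1 and is attained) *)
definition ollivier_curvature :: "('a \<Rightarrow> 'a \<Rightarrow> real) \<Rightarrow> 'a \<Rightarrow> 'a \<Rightarrow> real" where
  "ollivier_curvature q x y =
     Inf {grad q x y (laplacian q f) | f.
            (\<forall>a b. a \<noteq> b \<longrightarrow> \<bar>grad q a b f\<bar> \<le> 1) \<and> grad q y x f = 1}"

definition nonneg_ollivier :: "('a \<Rightarrow> 'a \<Rightarrow> real) \<Rightarrow> bool" where
  "nonneg_ollivier q \<longleftrightarrow> (\<forall>x y. x \<noteq> y \<longrightarrow> ollivier_curvature q x y \<ge> 0)"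

definition coupling_graph ::
  "('a \<Rightarrow> 'a \<Rightarrow> real) \<Rightarrow> ('a \<times> 'a \<Rightarrow> 'a \<times> 'a \<Rightarrow> real) \<Rightarrow> bool" where
  "coupling_graph q qt \<longleftrightarrow> is_graph qt \<and>
     (\<forall>f. laplacian qt (\<lambda>(x, y). f x) = (\<lambda>(x, y). laplacian q f x)) \<and>
     (\<forall>f. laplacian qt (\<lambda>(x, y). f y) = (\<lambda>(x, y). laplacian q f y))"

definition transport_plan ::
  "('a \<Rightarrow> 'a \<Rightarrow> real) \<Rightarrow> 'a \<Rightarrow> 'a \<Rightarrow> ('a \<times> 'a \<Rightarrow> real) \<Rightarrow> bool" where
  "transport_plan q x0 y0 \<rho> \<longleftrightarrow> (\<forall>p. \<rho> p \<ge> 0) \<and>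
     (\<forall>x. x \<noteq> x0 \<longrightarrow> ((\<lambda>y. \<rho> (x, y)) has_sum q x0 x) UNIV) \<and>
     (\<forall>y. y \<noteq> y0 \<longrightarrow> ((\<lambda>x. \<rho> (x, y)) has_sum q y0 y) UNIV)"

definition plan_cost ::
  "('a \<Rightarrow> 'a \<Rightarrow> real) \<Rightarrow> 'a \<Rightarrow> 'a \<Rightarrow> ('a \<times> 'a \<Rightarrow> real) \<Rightarrow> real" where
  "plan_cost q x0 y0 \<rho> =
     (\<Sum>\<^sub>\<infinity>(x, y)\<in>UNIV. \<rho> (x, y) * (real (gdist q x0 y0) - real (gdist q x y)))"

definition plan_mu ::
  "('a \<Rightarrow> 'a \<Rightarrow> real) \<Rightarrow> 'a \<Rightarrow> 'a \<Rightarrow> ('a \<times> 'a \<Rightarrow> real) \<Rightarrow> int \<Rightarrow> real" where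
  "plan_mu q x0 y0 \<rho> k =
     (\<Sum>\<^sub>\<infinity>(x, y)\<in>{(x, y). int (gdist q x y) - int (gdist q x0 y0) = k}. \<rho> (x, y))"

definition optimal_plan ::
  "('a \<Rightarrow> 'a \<Rightarrow> real) \<Rightarrow> 'a \<Rightarrow> 'a \<Rightarrow> ('a \<times> 'a \<Rightarrow> real) \<Rightarrow> bool" where
  "optimal_plan q x0 y0 \<rho> \<longleftrightarrow> transport_plan q x0 y0 \<rho> \<and>
     (\<forall>\<sigma>. transport_plan q x0 y0 \<sigma> \<longrightarrow> plan_cost q x0 y0 \<sigma> \<le> plan_cost q x0 y0 \<rho>)"

definition perfect_coupling ::
  "('a \<Rightarrow> 'a \<Rightarrow> real) \<Rightarrow> ('a \<times> 'a \<Rightarrow> 'a \<times> 'a \<Rightarrow> real) \<Rightarrow> bool" where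
  "perfect_coupling q qt \<longleftrightarrow> coupling_graph q qt \<and>
     (\<forall>x0 y0. optimal_plan q x0 y0 (qt (x0, y0)) \<and>
        (\<forall>k. \<bar>k\<bar> > 1 \<longrightarrow> plan_mu q x0 y0 (qt (x0, y0)) k = 0) \<and>
        (x0 \<noteq> y0 \<longrightarrow> plan_mu q x0 y0 (qt (x0, y0)) (-1) \<ge> 2 * qmin q))"

definition dirichlet_laplacian ::
  "('a \<Rightarrow> 'a \<Rightarrow> real) \<Rightarrow> 'a set \<Rightarrow> ('a \<Rightarrow> real) \<Rightarrow> 'a \<Rightarrow> real" where
  "dirichlet_laplacian q W f x =
     (if x \<in> W then laplacian q (\<lambda>z. if z \<in> W then f z else 0) x else 0)"

definition dirichlet_heat ::
  "('a \<Rightarrow> 'a \<Rightarrow> real) \<Rightarrow> 'a set \<Rightarrow> real \<Rightarrow> ('a \<Rightarrow> real) \<Rightarrow> 'a \<Rightarrow> real" where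
  "dirichlet_heat q W t f x =
     (\<Sum>k. t ^ k / fact k * ((dirichlet_laplacian q W ^^ k) (\<lambda>z. if z \<in> W then f z else 0)) x)"

(* minimal heat semigroup on \<nat>_0, via the exhaustion {0..N} *)
definition heat_nat :: "(nat \<Rightarrow> nat \<Rightarrow> real) \<Rightarrow> real \<Rightarrow> (nat \<Rightarrow> real) \<Rightarrow> nat \<Rightarrow> real" where
  "heat_nat q t f n = lim (\<lambda>N. dirichlet_heat q {..N} t f n)"

definition q_N0 :: "real \<Rightarrow> nat \<Rightarrow> nat \<Rightarrow> real" where
  "q_N0 c x y = (if (x = y + 1 \<or> y = x + 1) \<and> x > 0 then 2 * c else 0)"

definition phi :: "real \<Rightarrow> real \<Rightarrow> nat \<Rightarrow> real" where
  "phi c t n = heat_nat (q_N0 c) t (indicator {0<..}) n"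

end

theory Submission
  imports Defs
begin

definition opr :: "(nat \<Rightarrow> real) \<Rightarrow> (nat \<Rightarrow> real) \<Rightarrow> (nat \<Rightarrow> real) \<Rightarrow> (nat \<Rightarrow> real) \<Rightarrow> nat \<Rightarrow> real" where
  "opr a b e h n = a n * h (Suc n) + b n * (if n = 0 then 0 else h (n - 1)) + e n * h n"

lemma opr_bound:
  assumes "\<And>n. \<bar>a n\<bar> \<le> K" "\<And>n. \<bar>b n\<bar> \<le> K" "\<And>n. \<bar>e n\<bar> \<le> K" "\<And>n. \<bar>h n\<bar> \<le> H"
  shows "\<bar>opr a b e h n\<bar> \<le> 3 * K * H"
proof -
  have H0: "0 \<le> H" using assms(4)[of 0] by linarith
  have K0: "0 \<le> K" using assms(1)[of 0] by linarith
  have 1: "\<bar>a n * h (Suc n)\<bar> \<le> K * H"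
    unfolding abs_mult by (rule mult_mono) (use assms H0 K0 in auto)
  have 2: "\<bar>b n * (if n = 0 then 0 else h (n - 1))\<bar> \<le> K * H"
    unfolding abs_mult by (rule mult_mono) (use assms H0 K0 in auto)
  have 3: "\<bar>e n * h n\<bar> \<le> K * H"
    unfolding abs_mult by (rule mult_mono) (use assms H0 K0 in auto)
  show ?thesis unfolding opr_def using 1 2 3 by linarith
qed

lemma opr_pow_bound:
  assumes "\<And>n. \<bar>a n\<bar> \<le> K" "\<And>n. \<bar>b n\<bar> \<le> K" "\<And>n. \<bar>e n\<bar> \<le> K" "\<And>n. \<bar>h n\<bar> \<le> H"
  shows "\<bar>(opr a b e ^^ k) h n\<bar> \<le> (3 * K) ^ k * H"
proof (induction k arbitrary: n)
  case 0 then show ?case using assms by simp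
next
  case (Suc k)
  have "\<bar>opr a b e ((opr a b e ^^ k) h) n\<bar> \<le> 3 * K * ((3 * K) ^ k * H)"
    by (rule opr_bound) (use assms Suc in auto)
  then show ?case by (simp add: algebra_simps)
qed

lemma opr_nonneg:
  assumes "\<And>n. a n \<ge> 0" "\<And>n. b n \<ge> 0" "\<And>n. e n \<ge> 0" "\<And>n. h n \<ge> 0"
  shows "(opr a b e ^^ k) h n \<ge> 0"
proof (induction k arbitrary: n)
  case 0 then show ?case using assms by simp
next
  case (Suc k)
  then show ?case using assms by (simp add: opr_def)
qed

lemma opr_sum:
  assumes "finite J"
  shows "opr a b e (\<lambda>m. \<Sum>j\<in>J. w j * g j m) n = (\<Sum>j\<in>J. w j * opr a b e (g j) n)"
  unfolding opr_def by (simp add: sum_distrib_left sum.distrib algebra_simps)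

lemma opr_scale: "opr a b e (\<lambda>m. c * g m) n = c * opr a b e g n"
  unfolding opr_def by (simp add: algebra_simps)

lemma opr_binom:
  "(opr a b (\<lambda>n. e n + l) ^^ k) h n = (\<Sum>j\<le>k. of_nat (k choose j) * l ^ (k - j) * (opr a b e ^^ j) h n)"
proof (induction k arbitrary: n)
  case 0 then show ?case by simp
next
  case (Suc k)
  have IH: "(opr a b (\<lambda>n. e n + l) ^^ k) h = (\<lambda>m. \<Sum>j\<le>k. (of_nat (k choose j) * l ^ (k - j)) * (opr a b e ^^ j) h m)"
    using Suc by auto
  have "(opr a b (\<lambda>n. e n + l) ^^ Suc k) h n = opr a b (\<lambda>n. e n + l) ((opr a b (\<lambda>n. e n + l) ^^ k) h) n"
    by simp
  also have "\<dots> = opr a b e ((opr a b (\<lambda>n. e n + l) ^^ k) h) n + l * (opr a b (\<lambda>n. e n + l) ^^ k) h n"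
    by (simp add: opr_def algebra_simps)
  also have "\<dots> = (\<Sum>j\<le>k. (of_nat (k choose j) * l ^ (k - j)) * (opr a b e ^^ Suc j) h n)
        + (\<Sum>j\<le>k. (of_nat (k choose j) * l ^ (Suc k - j)) * (opr a b e ^^ j) h n)"
    unfolding IH by (simp add: opr_sum opr_scale sum_distrib_left algebra_simps Suc_diff_le)
  also have "\<dots> = (\<Sum>j\<le>Suc k. of_nat (Suc k choose j) * l ^ (Suc k - j) * (opr a b e ^^ j) h n)"
  proof -
    let ?P = "\<lambda>j. (opr a b e ^^ j) h n"
    have A: "(\<Sum>j\<le>k. (of_nat (k choose j) * l ^ (k - j)) * ?P (Suc j))
        = (\<Sum>j\<le>Suc k. (if j = 0 then 0 else of_nat (k choose (j - 1)) * l ^ (Suc k - j)) * ?P j)"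
      by (subst sum.atMost_Suc_shift) (simp add: binomial_eq_0)
    have B: "(\<Sum>j\<le>k. (of_nat (k choose j) * l ^ (Suc k - j)) * ?P j)
        = (\<Sum>j\<le>Suc k. (of_nat (k choose j) * l ^ (Suc k - j)) * ?P j)"
      by (simp add: binomial_eq_0)
    have C: "(\<Sum>j\<le>Suc k. (if j = 0 then 0 else of_nat (k choose (j - 1)) * l ^ (Suc k - j)) * ?P j)
        + (\<Sum>j\<le>Suc k. (of_nat (k choose j) * l ^ (Suc k - j)) * ?P j)
        = (\<Sum>j\<le>Suc k. of_nat (Suc k choose j) * l ^ (Suc k - j) * ?P j)"
      unfolding sum.distrib[symmetric]
    proof (rule sum.cong[OF refl])
      fix j assume "j \<in> {..Suc k}"
      show "(if j = 0 then 0 else of_nat (k choose (j - 1)) * l ^ (Suc k - j)) * ?P j +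
            of_nat (k choose j) * l ^ (Suc k - j) * ?P j =
            of_nat (Suc k choose j) * l ^ (Suc k - j) * ?P j"
        by (cases j) (simp_all add: algebra_simps)
    qed
    show ?thesis using A B C by linarith
  qed
  finally show ?case .
qed

definition expo :: "((nat \<Rightarrow> real) \<Rightarrow> nat \<Rightarrow> real) \<Rightarrow> real \<Rightarrow> (nat \<Rightarrow> real) \<Rightarrow> nat \<Rightarrow> real" where
  "expo A t h n = (\<Sum>k. t ^ k / fact k * (A ^^ k) h n)"

locale bnd =
  fixes a b e :: "nat \<Rightarrow> real" and K :: real
  assumes ba: "\<And>n. \<bar>a n\<bar> \<le> K" and bb: "\<And>n. \<bar>b n\<bar> \<le> K" and be: "\<And>n. \<bar>e n\<bar> \<le> K"
begin

lemma K0: "0 \<le> K" using ba[of 0] by linarith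

lemma term_bound:
  assumes "\<And>m. \<bar>h m\<bar> \<le> H"
  shows "\<bar>t ^ k / fact k * (opr a b e ^^ k) h n\<bar> \<le> H * (inverse (fact k) * (3 * K * \<bar>t\<bar>) ^ k)"
proof -
  have H0: "0 \<le> H" using assms[of 0] by linarith
  have "\<bar>t ^ k / fact k * (opr a b e ^^ k) h n\<bar> = \<bar>t\<bar> ^ k / fact k * \<bar>(opr a b e ^^ k) h n\<bar>"
    by (simp add: abs_mult power_abs)
  also have "\<dots> \<le> \<bar>t\<bar> ^ k / fact k * ((3 * K) ^ k * H)"
    by (rule mult_left_mono) (use opr_pow_bound[OF ba bb be assms] in auto)
  also have "\<dots> = H * (inverse (fact k) * (3 * K * \<bar>t\<bar>) ^ k)"
    by (simp add: power_mult_distrib field_simps)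
  finally show ?thesis .
qed

lemma expo_abs_summable:
  assumes "\<And>m. \<bar>h m\<bar> \<le> H"
  shows "summable (\<lambda>k. \<bar>t ^ k / fact k * (opr a b e ^^ k) h n\<bar>)"
proof (rule summable_comparison_test[where g = "\<lambda>k. H * (inverse (fact k) * (3 * K * \<bar>t\<bar>) ^ k)"])
  show "\<exists>N. \<forall>k\<ge>N. norm \<bar>t ^ k / fact k * (opr a b e ^^ k) h n\<bar> \<le> H * (inverse (fact k) * (3 * K * \<bar>t\<bar>) ^ k)"
  proof (intro exI allI impI)
    fix k :: nat
    show "norm \<bar>t ^ k / fact k * (opr a b e ^^ k) h n\<bar> \<le> H * (inverse (fact k) * (3 * K * \<bar>t\<bar>) ^ k)"
      unfolding real_norm_def abs_abs by (rule term_bound[where h=h and H=H, OF assms])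
  qed
  show "summable (\<lambda>k. H * (inverse (fact k) * (3 * K * \<bar>t\<bar>) ^ k))"
    by (intro summable_mult summable_exp)
qed

lemma expo_summable:
  assumes "\<And>m. \<bar>h m\<bar> \<le> H"
  shows "summable (\<lambda>k. t ^ k / fact k * (opr a b e ^^ k) h n)"
  by (rule summable_rabs_cancel[OF expo_abs_summable[where h=h and H=H, OF assms]])

lemma expo_shift:
  assumes "\<And>m. \<bar>h m\<bar> \<le> H"
  shows "expo (opr a b (\<lambda>n. e n + l)) t h n = exp (l * t) * expo (opr a b e) t h n"
proof -
  let ?A = "opr a b e"
  define \<alpha> where "\<alpha> k = t ^ k / fact k * (?A ^^ k) h n" for k
  define \<beta> where "\<beta> k = (l * t) ^ k / fact k" for k
  have sa: "summable (\<lambda>k. norm (\<alpha> k))" using expo_abs_summable[where h=h and H=H, OF assms] by (simp add: \<alpha>_def)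
  have sb: "summable (\<lambda>k. norm (\<beta> k))"
    using summable_exp[of "\<bar>l * t\<bar>"] by (simp add: \<beta>_def abs_mult power_abs field_simps)
  have eb: "exp (l * t) = (\<Sum>k. \<beta> k)"
    using exp_converges[of "l * t"] unfolding \<beta>_def by (simp add: sums_iff field_simps)
  have "expo ?A t h n * exp (l * t) = (\<Sum>k. \<Sum>i\<le>k. \<alpha> i * \<beta> (k - i))"
    unfolding eb expo_def \<alpha>_def[symmetric] by (rule Cauchy_product[OF sa sb])
  also have "\<dots> = (\<Sum>k. t ^ k / fact k * (opr a b (\<lambda>n. e n + l) ^^ k) h n)"
  proof (rule suminf_cong)
    fix k
    have "(\<Sum>i\<le>k. \<alpha> i * \<beta> (k - i)) = (\<Sum>i\<le>k. t ^ k / fact k * (of_nat (k choose i) * l ^ (k - i) * (?A ^^ i) h n))"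
    proof (rule sum.cong[OF refl])
      fix i assume "i \<in> {..k}"
      then have ik: "i \<le> k" by simp
      have "t ^ k = t ^ i * t ^ (k - i)" using ik by (simp add: power_add[symmetric])
      moreover have "real (k choose i) = fact k / (fact i * fact (k - i))" using binomial_fact[OF ik] by simp
      ultimately show "\<alpha> i * \<beta> (k - i) = t ^ k / fact k * (of_nat (k choose i) * l ^ (k - i) * (?A ^^ i) h n)"
        by (simp add: \<alpha>_def \<beta>_def power_mult_distrib field_simps)
    qed
    also have "\<dots> = t ^ k / fact k * (opr a b (\<lambda>n. e n + l) ^^ k) h n"
      by (simp add: opr_binom sum_distrib_left)
    finally show "(\<Sum>i\<le>k. \<alpha> i * \<beta> (k - i)) = t ^ k / fact k * (opr a b (\<lambda>n. e n + l) ^^ k) h n" .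
  qed
  finally show ?thesis unfolding expo_def by (simp add: mult.commute)
qed

lemma expo_nonneg:
  assumes "\<And>m. \<bar>h m\<bar> \<le> H" "\<And>n. h n \<ge> 0" "\<And>n. a n \<ge> 0" "\<And>n. b n \<ge> 0" "t \<ge> 0"
  shows "expo (opr a b e) t h n \<ge> 0"
proof -
  have "expo (opr a b (\<lambda>n. e n + K)) t h n \<ge> 0"
    unfolding expo_def
  proof (rule suminf_nonneg)
    show "summable (\<lambda>k. t ^ k / fact k * (opr a b (\<lambda>n. e n + K) ^^ k) h n)"
    proof -
      have "bnd a b (\<lambda>n. e n + K) (2 * K)"
      proof unfold_locales
        fix n
        show "\<bar>a n\<bar> \<le> 2 * K" using ba[of n] K0 by linarith
        show "\<bar>b n\<bar> \<le> 2 * K" using bb[of n] K0 by linarith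
        show "\<bar>e n + K\<bar> \<le> 2 * K" using be[of n] K0 by linarith
      qed
      then show ?thesis using bnd.expo_summable assms(1) by blast
    qed
    fix k
    have "(opr a b (\<lambda>n. e n + K) ^^ k) h n \<ge> 0"
      by (rule opr_nonneg) (use assms be in \<open>auto simp: abs_le_iff\<close>, smt (verit) be abs_le_iff)
    then show "0 \<le> t ^ k / fact k * (opr a b (\<lambda>n. e n + K) ^^ k) h n"
      using assms(5) by simp
  qed
  then have "exp (K * t) * expo (opr a b e) t h n \<ge> 0" using expo_shift[where h=h and H=H, OF assms(1)] by simp
  then show ?thesis by (simp add: zero_le_mult_iff)
qed

lemma expo_deriv:
  assumes "\<And>m. \<bar>h m\<bar> \<le> H"
  shows "((\<lambda>s. expo (opr a b e) s h n) has_real_derivative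
           (\<Sum>k. t ^ k / fact k * (opr a b e ^^ Suc k) h n)) (at t)"
proof -
  define c where "c k = (opr a b e ^^ k) h n / fact k" for k
  have eq: "(\<lambda>s. expo (opr a b e) s h n) = (\<lambda>s. \<Sum>k. c k * s ^ k)"
    unfolding expo_def c_def by (rule ext, rule suminf_cong) (simp add: field_simps)
  have "((\<lambda>s. \<Sum>k. c k * s ^ k) has_real_derivative (\<Sum>k. diffs c k * t ^ k)) (at t)"
  proof (rule termdiffs_strong_converges_everywhere)
    fix y :: real
    show "summable (\<lambda>k. c k * y ^ k)"
      using expo_summable[where h=h and H=H and t=y and n=n, OF assms] by (simp add: c_def field_simps)
  qed
  moreover have "(\<Sum>k. diffs c k * t ^ k) = (\<Sum>k. t ^ k / fact k * (opr a b e ^^ Suc k) h n)"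
  proof (rule suminf_cong)
    fix k
    have "real (Suc k) \<noteq> 0" by simp
    then show "diffs c k * t ^ k = t ^ k / fact k * (opr a b e ^^ Suc k) h n"
      by (simp add: diffs_def c_def fact_Suc field_simps del: funpow.simps of_nat_Suc)
  qed
  ultimately show ?thesis unfolding eq by simp
qed

lemma expo_opr:
  assumes "\<And>m. \<bar>h m\<bar> \<le> H"
  shows "opr a b e (expo (opr a b e) t h) n = (\<Sum>k. t ^ k / fact k * (opr a b e ^^ Suc k) h n)"
proof -
  let ?A = "opr a b e"
  let ?T = "\<lambda>m k. t ^ k / fact k * (?A ^^ k) h m"
  have s: "\<And>m. summable (?T m)" using expo_summable[where h=h and H=H and t=t, OF assms] by blast
  have "opr a b e (expo ?A t h) n = a n * suminf (?T (Suc n)) + b n * (if n = 0 then 0 else suminf (?T (n - 1))) + e n * suminf (?T n)"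
    by (simp add: opr_def expo_def)
  also have "\<dots> = (\<Sum>k. a n * ?T (Suc n) k + b n * (if n = 0 then 0 else ?T (n - 1) k) + e n * ?T n k)"
  proof -
    have 1: "a n * suminf (?T (Suc n)) = (\<Sum>k. a n * ?T (Suc n) k)" by (rule suminf_mult[OF s, symmetric])
    have 2: "b n * (if n = 0 then 0 else suminf (?T (n - 1))) = (\<Sum>k. b n * (if n = 0 then 0 else ?T (n - 1) k))"
      using suminf_mult[OF s[of "n - 1"], of "b n"] by simp
    have 3: "e n * suminf (?T n) = (\<Sum>k. e n * ?T n k)" by (rule suminf_mult[OF s, symmetric])
    have s1: "summable (\<lambda>k. a n * ?T (Suc n) k)" by (intro summable_mult s)
    have s2: "summable (\<lambda>k. b n * (if n = 0 then 0 else ?T (n - 1) k))"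
      using summable_mult[OF s[of "n - 1"], of "b n"] by (cases "n = 0") simp_all
    have s3: "summable (\<lambda>k. e n * ?T n k)" by (intro summable_mult s)
    show ?thesis unfolding 1 2 3 by (simp only: suminf_add[OF s1 s2] suminf_add[OF summable_add[OF s1 s2] s3])
  qed
  also have "\<dots> = (\<Sum>k. t ^ k / fact k * (opr a b e ^^ Suc k) h n)"
    by (rule suminf_cong) (simp add: opr_def algebra_simps)
  finally show ?thesis .
qed

end

definition LL :: "real \<Rightarrow> (nat \<Rightarrow> real) \<Rightarrow> nat \<Rightarrow> real" where
  "LL r = opr (\<lambda>n. if n > 0 then r else 0) (\<lambda>n. if n > 0 then r else 0) (\<lambda>n. if n > 0 then - 2 * r else 0)"
definition MM :: "real \<Rightarrow> (nat \<Rightarrow> real) \<Rightarrow> nat \<Rightarrow> real" where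
  "MM r = opr (\<lambda>n. r) (\<lambda>n. r) (\<lambda>n. if n = 0 then - r else - 2 * r)"
definition NN :: "real \<Rightarrow> (nat \<Rightarrow> real) \<Rightarrow> nat \<Rightarrow> real" where
  "NN r = opr (\<lambda>n. r) (\<lambda>n. r) (\<lambda>n. - 2 * r)"

definition D1 :: "(nat \<Rightarrow> real) \<Rightarrow> nat \<Rightarrow> real" where
  "D1 g n = g (Suc n) - g n"
definition D2 :: "(nat \<Rightarrow> real) \<Rightarrow> nat \<Rightarrow> real" where
  "D2 g n = 2 * g (Suc n) - g n - g (Suc (Suc n))"

definition f0 :: "nat \<Rightarrow> real" where "f0 = indicator {0<..}"

lemma LL_eq: "LL r g n = (if n > 0 then r * (g (Suc n) + g (n - 1) - 2 * g n) else 0)"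
  by (simp add: LL_def opr_def algebra_simps)

lemma D1_LL: "D1 (LL r g) = MM r (D1 g)"
  by (rule ext, case_tac x) (simp_all add: LL_def MM_def D1_def opr_def algebra_simps)

lemma D2_LL: "D2 (LL r g) = NN r (D2 g)"
  by (rule ext, case_tac x) (simp_all add: LL_def NN_def D2_def opr_def algebra_simps)

lemma D1_pow: "D1 ((LL r ^^ k) g) = (MM r ^^ k) (D1 g)"
  by (induction k) (simp_all add: D1_LL)

lemma D2_pow: "D2 ((LL r ^^ k) g) = (NN r ^^ k) (D2 g)"
  by (induction k) (simp_all add: D2_LL)

lemma f0_bound: "\<bar>f0 n\<bar> \<le> 1" by (simp add: f0_def indicator_def)
lemma D1_f0: "D1 f0 n = (if n = 0 then 1 else 0)" by (simp add: f0_def D1_def indicator_def)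
lemma D2_f0: "D2 f0 n = (if n = 0 then 1 else 0)" by (simp add: f0_def D2_def indicator_def)

context fixes r :: real assumes r0: "r \<ge> 0"
begin

lemma bndL: "bnd (\<lambda>n. if n > 0 then r else 0) (\<lambda>n. if n > 0 then r else 0) (\<lambda>n. if n > 0 then - 2 * r else 0) (2 * r)"
  by unfold_locales (use r0 in auto)
lemma bndM: "bnd (\<lambda>n. r) (\<lambda>n. r) (\<lambda>n. if n = 0 then - r else - 2 * r) (2 * r)"
  by unfold_locales (use r0 in auto)
lemma bndN: "bnd (\<lambda>n. r) (\<lambda>n. r) (\<lambda>n. - 2 * r) (2 * r)"
  by unfold_locales (use r0 in auto)

lemma LL_summable:
  assumes "\<And>m. \<bar>h m\<bar> \<le> H"
  shows "summable (\<lambda>k. t ^ k / fact k * (LL r ^^ k) h n)"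
  unfolding LL_def by (rule bnd.expo_summable[OF bndL assms])

lemma phi_D1: "expo (LL r) t f0 (Suc n) - expo (LL r) t f0 n = expo (MM r) t (D1 f0) n"
proof -
  have s: "\<And>m. summable (\<lambda>k. t ^ k / fact k * (LL r ^^ k) f0 m)" by (rule LL_summable[where h=f0 and H=1, OF f0_bound])
  have "expo (LL r) t f0 (Suc n) - expo (LL r) t f0 n = (\<Sum>k. t ^ k / fact k * (LL r ^^ k) f0 (Suc n) - t ^ k / fact k * (LL r ^^ k) f0 n)"
    unfolding expo_def by (rule suminf_diff[OF s[of "Suc n"] s[of n]])
  also have "\<dots> = expo (MM r) t (D1 f0) n"
    unfolding expo_def
  proof (rule suminf_cong)
    fix k
    have B: "t ^ k / fact k * (LL r ^^ k) f0 (Suc n) - t ^ k / fact k * (LL r ^^ k) f0 n = t ^ k / fact k * D1 ((LL r ^^ k) f0) n"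
      by (simp add: D1_def algebra_simps)
    show "t ^ k / fact k * (LL r ^^ k) f0 (Suc n) - t ^ k / fact k * (LL r ^^ k) f0 n = t ^ k / fact k * (MM r ^^ k) (D1 f0) n"
      using B unfolding D1_pow .
  qed
  finally show ?thesis .
qed

lemma phi_D2: "2 * expo (LL r) t f0 (Suc n) - expo (LL r) t f0 n - expo (LL r) t f0 (Suc (Suc n)) = expo (NN r) t (D2 f0) n"
proof -
  have s: "\<And>m. summable (\<lambda>k. t ^ k / fact k * (LL r ^^ k) f0 m)" by (rule LL_summable[where h=f0 and H=1, OF f0_bound])
  define F where "F m k = t ^ k / fact k * (LL r ^^ k) f0 m" for m k
  have sF: "summable (F m)" for m unfolding F_def by (rule s)
  have eF: "expo (LL r) t f0 m = suminf (F m)" for m unfolding expo_def by (rule suminf_cong) (simp add: F_def)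
  have a1: "summable (\<lambda>k. 2 * F (Suc n) k)" by (rule summable_mult[OF sF[of "Suc n"]])
  have c1: "(\<Sum>k. 2 * F (Suc n) k - F n k - F (Suc (Suc n)) k) = (\<Sum>k. 2 * F (Suc n) k - F n k) - suminf (F (Suc (Suc n)))"
    by (rule suminf_diff[OF summable_diff[OF a1 sF[of n]] sF[of "Suc (Suc n)"], symmetric])
  have c2: "(\<Sum>k. 2 * F (Suc n) k - F n k) = (\<Sum>k. 2 * F (Suc n) k) - suminf (F n)"
    by (rule suminf_diff[OF a1 sF[of n], symmetric])
  have c3: "(\<Sum>k. 2 * F (Suc n) k) = 2 * suminf (F (Suc n))"
    by (rule suminf_mult[OF sF[of "Suc n"]])
  have e: "expo (NN r) t (D2 f0) n = (\<Sum>k. 2 * F (Suc n) k - F n k - F (Suc (Suc n)) k)"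
    unfolding expo_def
  proof (rule suminf_cong)
    fix k
    have B: "2 * F (Suc n) k - F n k - F (Suc (Suc n)) k = t ^ k / fact k * D2 ((LL r ^^ k) f0) n"
      unfolding F_def D2_def by (simp add: algebra_simps)
    show "t ^ k / fact k * (NN r ^^ k) (D2 f0) n = 2 * F (Suc n) k - F n k - F (Suc (Suc n)) k"
      using B unfolding D2_pow by (rule sym)
  qed
  show ?thesis unfolding e c1 c2 c3 eF ..
qed

lemma phi_mono: "t \<ge> 0 \<Longrightarrow> expo (LL r) t f0 n \<le> expo (LL r) t f0 (Suc n)"
proof -
  assume t: "t \<ge> 0"
  have h1: "\<And>m. \<bar>D1 f0 m\<bar> \<le> 1" by (simp add: D1_f0)
  have h2: "\<And>m. D1 f0 m \<ge> 0" by (simp add: D1_f0)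
  have P: "0 \<le> expo (MM r) t (D1 f0) n" unfolding MM_def
    by (rule bnd.expo_nonneg[OF bndM h1 h2]) (use r0 t in auto)
  have Q: "expo (LL r) t f0 (Suc n) - expo (LL r) t f0 n = expo (MM r) t (D1 f0) n" by (rule phi_D1)
  have "0 \<le> expo (LL r) t f0 (Suc n) - expo (LL r) t f0 n" using P unfolding Q[symmetric] .
  then show ?thesis by (simp only: diff_ge_0_iff_ge)
qed

lemma phi_concave: "t \<ge> 0 \<Longrightarrow> expo (LL r) t f0 n + expo (LL r) t f0 (Suc (Suc n)) \<le> 2 * expo (LL r) t f0 (Suc n)"
proof -
  assume t: "t \<ge> 0"
  have h1: "\<And>m. \<bar>D2 f0 m\<bar> \<le> 1" by (simp add: D2_f0)
  have h2: "\<And>m. D2 f0 m \<ge> 0" by (simp add: D2_f0)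
  have P: "0 \<le> expo (NN r) t (D2 f0) n" unfolding NN_def
    by (rule bnd.expo_nonneg[OF bndN h1 h2]) (use r0 t in auto)
  have Q: "2 * expo (LL r) t f0 (Suc n) - expo (LL r) t f0 n - expo (LL r) t f0 (Suc (Suc n)) = expo (NN r) t (D2 f0) n" by (rule phi_D2)
  have "0 \<le> 2 * expo (LL r) t f0 (Suc n) - expo (LL r) t f0 n - expo (LL r) t f0 (Suc (Suc n))" using P unfolding Q[symmetric] .
  then show ?thesis by (simp only: diff_ge_0_iff_ge diff_diff_eq)
qed

lemma LL_pow_0: "(LL r ^^ k) f0 0 = 0"
  by (cases k) (simp_all add: LL_eq f0_def)

lemma phi_0: "expo (LL r) t f0 0 = 0"
  by (simp add: expo_def LL_pow_0)

lemma phi_deriv: "((\<lambda>s. expo (LL r) s f0 n) has_real_derivative LL r (expo (LL r) t f0) n) (at t)"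
  unfolding LL_def bnd.expo_opr[OF bndL, where h=f0 and H=1 and n=n and t=t, OF f0_bound]
  by (rule bnd.expo_deriv[OF bndL, where h=f0 and H=1 and n=n and t=t, OF f0_bound])

end

lemma lap_qN0: "laplacian (q_N0 c) g m = LL (2 * max c 0) g m"
proof (cases "c > 0")
  case False
  then have "{y. q_N0 c m y > 0} = {}" by (auto simp: q_N0_def)
  then show ?thesis using False by (simp add: laplacian_def LL_eq)
next
  case True
  show ?thesis
  proof (cases "m = 0")
    case True
    then have "{y. q_N0 c m y > 0} = {}" by (auto simp: q_N0_def)
    then show ?thesis using True by (simp add: laplacian_def LL_eq)
  next
    case False
    then have S: "{y. q_N0 c m y > 0} = {m - 1, Suc m}" using \<open>c > 0\<close> by (auto simp: q_N0_def)
    have ne: "m - 1 \<noteq> Suc m" by simp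
    have "laplacian (q_N0 c) g m = q_N0 c m (m - 1) * (g (m - 1) - g m) + q_N0 c m (Suc m) * (g (Suc m) - g m)"
      unfolding laplacian_def S using ne by simp
    also have "\<dots> = LL (2 * max c 0) g m" using False \<open>c > 0\<close> by (simp add: q_N0_def LL_eq algebra_simps)
    finally show ?thesis .
  qed
qed

definition RR :: "nat \<Rightarrow> (nat \<Rightarrow> real) \<Rightarrow> nat \<Rightarrow> real" where
  "RR N g = (\<lambda>z. if z \<in> {..N} then g z else 0)"

lemma dl_eq0: "dirichlet_laplacian (q_N0 c) {..N} g m = (if m \<le> N then LL (2 * max c 0) (RR N g) m else 0)"
  by (simp add: dirichlet_laplacian_def lap_qN0 RR_def)

lemma dl_pow_eq: "m + k \<le> N \<Longrightarrow> (dirichlet_laplacian (q_N0 c) {..N} ^^ k) (RR N f) m = (LL (2 * max c 0) ^^ k) f m"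
proof (induction k arbitrary: m)
  case 0 then show ?case by (simp add: RR_def)
next
  case (Suc k)
  let ?D = "dirichlet_laplacian (q_N0 c) {..N}"
  let ?r = "2 * max c 0"
  have m: "m \<le> N" using Suc by simp
  have "(?D ^^ Suc k) (RR N f) m = LL ?r (RR N ((?D ^^ k) (RR N f))) m"
    using m by (simp add: dl_eq0)
  also have "\<dots> = LL ?r ((LL ?r ^^ k) f) m"
  proof (cases "m = 0")
    case True then show ?thesis by (simp add: LL_eq)
  next
    case False
    have 1: "RR N ((?D ^^ k) (RR N f)) (Suc m) = (LL ?r ^^ k) f (Suc m)"
      using Suc.prems Suc.IH[of "Suc m"] by (simp add: RR_def)
    have 2: "RR N ((?D ^^ k) (RR N f)) (m - 1) = (LL ?r ^^ k) f (m - 1)"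
      using Suc.prems Suc.IH[of "m - 1"] by (simp add: RR_def)
    have 3: "RR N ((?D ^^ k) (RR N f)) m = (LL ?r ^^ k) f m"
      using Suc.prems Suc.IH[of m] by (simp add: RR_def)
    show ?thesis using 1 2 3 by (simp add: LL_eq)
  qed
  also have "\<dots> = (LL ?r ^^ Suc k) f m" by simp
  finally show ?case .
qed

lemma LL_bound: "r \<ge> 0 \<Longrightarrow> (\<And>m. \<bar>h m\<bar> \<le> H) \<Longrightarrow> \<bar>LL r h n\<bar> \<le> 3 * (2 * r) * H"
  unfolding LL_def by (rule opr_bound) auto

lemma LL_pow_bound: "r \<ge> 0 \<Longrightarrow> (\<And>m. \<bar>h m\<bar> \<le> H) \<Longrightarrow> \<bar>(LL r ^^ k) h n\<bar> \<le> (6 * r) ^ k * H"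
proof (induction k arbitrary: n)
  case 0 then show ?case by simp
next
  case (Suc k)
  have "\<bar>LL r ((LL r ^^ k) h) n\<bar> \<le> 3 * (2 * r) * ((6 * r) ^ k * H)"
    by (rule LL_bound) (use Suc in auto)
  then show ?case by (simp add: algebra_simps)
qed

lemma dl_pow_bound:
  "(\<And>m. \<bar>h m\<bar> \<le> H) \<Longrightarrow> \<bar>(dirichlet_laplacian (q_N0 c) {..N} ^^ k) h n\<bar> \<le> (6 * (2 * max c 0)) ^ k * H"
proof (induction k arbitrary: n)
  case 0 then show ?case by simp
next
  case (Suc k)
  let ?r = "2 * max c 0"
  have H0: "0 \<le> H" using Suc.prems[of 0] by linarith
  have b: "\<bar>RR N ((dirichlet_laplacian (q_N0 c) {..N} ^^ k) h) m\<bar> \<le> (6 * ?r) ^ k * H" for m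
    using Suc H0 by (simp add: RR_def)
  have "\<bar>LL ?r (RR N ((dirichlet_laplacian (q_N0 c) {..N} ^^ k) h)) n\<bar> \<le> 3 * (2 * ?r) * ((6 * ?r) ^ k * H)"
    by (rule LL_bound) (use b in auto)
  moreover have "(dirichlet_laplacian (q_N0 c) {..N} ^^ Suc k) h n = dirichlet_laplacian (q_N0 c) {..N} ((dirichlet_laplacian (q_N0 c) {..N} ^^ k) h) n"
    by simp
  moreover have "dirichlet_laplacian (q_N0 c) {..N} ((dirichlet_laplacian (q_N0 c) {..N} ^^ k) h) n
     = (if n \<le> N then LL ?r (RR N ((dirichlet_laplacian (q_N0 c) {..N} ^^ k) h)) n else 0)"
    by (rule dl_eq0)
  moreover have "0 \<le> (6 * ?r) ^ Suc k * H" using H0 by simp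
  moreover have "3 * (2 * ?r) * ((6 * ?r) ^ k * H) = (6 * ?r) ^ Suc k * H" by (simp add: algebra_simps)
  ultimately show ?case by (cases "n \<le> N") simp_all
qed

lemma heat_conv:
  "(\<lambda>N. dirichlet_heat (q_N0 c) {..N} t f0 n) \<longlonglongrightarrow> expo (LL (2 * max c 0)) t f0 n"
proof -
  let ?r = "2 * max c 0"
  let ?D = "\<lambda>N. dirichlet_laplacian (q_N0 c) {..N}"
  define g where "g k = inverse (fact k) * (6 * ?r * \<bar>t\<bar>) ^ k" for k
  have gs: "summable g" unfolding g_def by (rule summable_exp)
  have g0: "g k \<ge> 0" for k by (simp add: g_def)
  define X where "X N k = t ^ k / fact k * (?D N ^^ k) (RR N f0) n" for N k
  define Y where "Y k = t ^ k / fact k * (LL ?r ^^ k) f0 n" for k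
  have RRb: "\<bar>RR N f0 m\<bar> \<le> 1" for N m by (simp add: RR_def f0_bound)
  have Xb: "\<bar>X N k\<bar> \<le> g k" for N k
  proof -
    have "\<bar>X N k\<bar> = \<bar>t\<bar> ^ k / fact k * \<bar>(?D N ^^ k) (RR N f0) n\<bar>"
      by (simp add: X_def abs_mult power_abs)
    also have "\<dots> \<le> \<bar>t\<bar> ^ k / fact k * ((6 * ?r) ^ k * 1)"
      by (rule mult_left_mono) (use dl_pow_bound[OF RRb] in auto)
    also have "\<dots> = g k" by (simp add: g_def power_mult_distrib field_simps)
    finally show ?thesis .
  qed
  have Yb: "\<bar>Y k\<bar> \<le> g k" for k
  proof -
    have "\<bar>Y k\<bar> = \<bar>t\<bar> ^ k / fact k * \<bar>(LL ?r ^^ k) f0 n\<bar>"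
      by (simp add: Y_def abs_mult power_abs)
    also have "\<dots> \<le> \<bar>t\<bar> ^ k / fact k * ((6 * ?r) ^ k * 1)"
      by (rule mult_left_mono) (use LL_pow_bound[of ?r f0 1 k n] f0_bound in auto)
    also have "\<dots> = g k" by (simp add: g_def power_mult_distrib field_simps)
    finally show ?thesis .
  qed
  have Xs: "summable (X N)" for N
    by (rule summable_comparison_test[OF _ gs]) (use Xb in auto)
  have Ys: "summable Y"
    by (rule summable_comparison_test[OF _ gs]) (use Yb in auto)
  have key: "\<bar>suminf (X (N + n)) - suminf Y\<bar> \<le> 2 * (suminf g - (\<Sum>i<N + 1. g i))" for N
  proof -
    define T where "T k = X (N + n) k - Y k" for k
    have Ts: "summable T" unfolding T_def by (intro summable_diff Xs Ys)
    have T0: "T k = 0" if "k < N + 1" for k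
      using that dl_pow_eq[of n k "N + n" c f0] by (simp add: T_def X_def Y_def)
    have Tb: "\<bar>T k\<bar> \<le> 2 * g k" for k using Xb[of "N + n" k] Yb[of k] by (simp add: T_def)
    have "suminf (X (N + n)) - suminf Y = suminf T" unfolding T_def by (rule suminf_diff[OF Xs Ys])
    also have "\<dots> = (\<Sum>j. T (j + (N + 1)))"
      using suminf_minus_initial_segment[OF Ts, of "N + 1"] T0 by simp
    finally have e: "suminf (X (N + n)) - suminf Y = (\<Sum>j. T (j + (N + 1)))" .
    have gs': "summable (\<lambda>j. 2 * g (j + (N + 1)))"
      by (intro summable_mult summable_ignore_initial_segment gs)
    have as: "summable (\<lambda>j. \<bar>T (j + (N + 1))\<bar>)"
      by (rule summable_comparison_test[OF _ gs']) (use Tb in auto)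
    have "\<bar>\<Sum>j. T (j + (N + 1))\<bar> \<le> (\<Sum>j. \<bar>T (j + (N + 1))\<bar>)" by (rule summable_rabs[OF as])
    also have "\<dots> \<le> (\<Sum>j. 2 * g (j + (N + 1)))" by (rule suminf_le) (use Tb as gs' in auto)
    also have "\<dots> = 2 * (\<Sum>j. g (j + (N + 1)))"
      by (rule suminf_mult) (intro summable_ignore_initial_segment gs)
    also have "\<dots> = 2 * (suminf g - (\<Sum>i<N + 1. g i))"
      using suminf_minus_initial_segment[OF gs, of "N + 1"] by simp
    finally show ?thesis using e by simp
  qed
  have lim0: "(\<lambda>N. 2 * (suminf g - (\<Sum>i<N + 1. g i))) \<longlonglongrightarrow> 0"
  proof -
    have "(\<lambda>N. \<Sum>i<N + 1. g i) \<longlonglongrightarrow> suminf g"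
      using LIMSEQ_ignore_initial_segment[OF summable_LIMSEQ[OF gs], of 1] by simp
    then have "(\<lambda>N. suminf g - (\<Sum>i<N + 1. g i)) \<longlonglongrightarrow> suminf g - suminf g"
      by (intro tendsto_intros)
    then show ?thesis using tendsto_mult[OF tendsto_const[of 2]] by fastforce
  qed
  have "(\<lambda>N. suminf (X (N + n)) - suminf Y) \<longlonglongrightarrow> 0"
    by (rule Lim_null_comparison[OF _ lim0]) (use key in auto)
  then have "(\<lambda>N. suminf (X (N + n))) \<longlonglongrightarrow> suminf Y"
    by (rule LIM_zero_cancel)
  then have "(\<lambda>N. suminf (X N)) \<longlonglongrightarrow> suminf Y" by (rule LIMSEQ_offset)
  moreover have "dirichlet_heat (q_N0 c) {..N} t f0 n = suminf (X N)" for N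
    unfolding dirichlet_heat_def by (rule suminf_cong) (simp add: X_def RR_def)
  moreover have "expo (LL ?r) t f0 n = suminf Y" unfolding expo_def by (rule suminf_cong) (simp add: Y_def)
  ultimately show ?thesis by simp
qed

lemma phi_expo: "phi c t n = expo (LL (2 * max c 0)) t f0 n"
  unfolding phi_def heat_nat_def f0_def[symmetric] using heat_conv by (rule limI)

lemma has_sum_fin_supp:
  fixes g :: "'a \<Rightarrow> real"
  assumes "finite G" "\<And>z. z \<notin> G \<Longrightarrow> g z = 0"
  shows "(g has_sum s) UNIV \<longleftrightarrow> s = sum g G"
proof
  have h: "(g has_sum sum g G) UNIV" by (rule has_sum_finite_neutralI[OF assms(1)]) (use assms in auto)
  show "(g has_sum s) UNIV \<Longrightarrow> s = sum g G" using h has_sum_unique by blast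
  show "s = sum g G \<Longrightarrow> (g has_sum s) UNIV" using h by simp
qed

lemma infsum_fin_supp:
  fixes g :: "'a \<Rightarrow> real"
  assumes "finite G" "\<And>z. z \<notin> G \<Longrightarrow> g z = 0"
  shows "infsum g A = sum g (A \<inter> G)"
proof -
  have "infsum g A = infsum g (A \<inter> G)"
    by (rule infsum_cong_neutral) (use assms in auto)
  also have "\<dots> = sum g (A \<inter> G)" using assms(1) by simp
  finally show ?thesis .
qed

locale gr =
  fixes q :: "'v \<Rightarrow> 'v \<Rightarrow> real"
  assumes isg: "is_graph q" and rev: "reversible q" and conn: "connected_graph q"
begin

abbreviation "E \<equiv> edges q"
abbreviation "d \<equiv> gdist q"
definition "dr x y = real (d x y)"

lemma q_nonneg: "q x y \<ge> 0" using isg by (simp add: is_graph_def)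
lemma fin_nb: "finite {y. q x y > 0}" using isg by (simp add: is_graph_def)

lemma q_sym: "q x y > 0 \<longleftrightarrow> q y x > 0"
proof -
  obtain m where m: "\<And>x. m x > 0" "\<And>x y. q x y * m x = q y x * m y" using rev by (auto simp: reversible_def)
  have "q x y > 0 \<longleftrightarrow> q x y * m x > 0" using m(1)[of x] by (simp add: zero_less_mult_iff)
  also have "\<dots> \<longleftrightarrow> q y x * m y > 0" using m(2) by simp
  also have "\<dots> \<longleftrightarrow> q y x > 0" using m(1)[of y] by (simp add: zero_less_mult_iff)
  finally show ?thesis .
qed

lemma relpow_sym: "(x, y) \<in> E ^^ n \<Longrightarrow> (y, x) \<in> E ^^ n"
proof (induction n arbitrary: y)
  case 0 then show ?case by simp
next
  case (Suc n)
  from Suc.prems obtain z where z: "(x, z) \<in> E ^^ n" "(z, y) \<in> E" by (rule relpow_Suc_E)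
  have "(y, z) \<in> E" using z(2) q_sym by (simp add: edges_def)
  moreover have "(z, x) \<in> E ^^ n" using Suc.IH z(1) by blast
  ultimately show ?case by (rule relpow_Suc_I2)
qed

lemma path_ex: "\<exists>n. (x, y) \<in> E ^^ n"
  using conn rtrancl_power by (metis connected_graph_def)

lemma d_path: "(x, y) \<in> E ^^ (d x y)"
  unfolding gdist_def using path_ex by (rule LeastI_ex)

lemma d_le: "(x, y) \<in> E ^^ n \<Longrightarrow> d x y \<le> n"
  unfolding gdist_def by (rule Least_le)

lemma d_sym: "d x y = d y x"
  using d_le[OF relpow_sym[OF d_path[of x y]]] d_le[OF relpow_sym[OF d_path[of y x]]] by simp

lemma d_tri: "d x z \<le> d x y + d y z"
proof -
  have "(x, z) \<in> E ^^ (d x y + d y z)"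
    unfolding relpow_add using d_path[of x y] d_path[of y z] by blast
  then show ?thesis by (rule d_le)
qed

lemma d_zero[simp]: "d x x = 0"
  using d_le[of x x 0] by simp

lemma d_zero_iff: "d x y = 0 \<longleftrightarrow> x = y"
  using d_path[of x y] by auto

lemma d_edge: "q x y > 0 \<Longrightarrow> d x y \<le> 1"
  by (rule d_le) (simp add: edges_def)

lemma dr_sym: "dr x y = dr y x" by (simp add: dr_def d_sym)
lemma dr_tri: "dr x z \<le> dr x y + dr y z"
  unfolding dr_def using d_tri[of x z y] by linarith
lemma dr_nonneg: "dr x y \<ge> 0" by (simp add: dr_def)
lemma dr_zero[simp]: "dr x x = 0" by (simp add: dr_def)
lemma dr_pos: "x \<noteq> y \<Longrightarrow> dr x y > 0" using d_zero_iff[of x y] by (simp add: dr_def)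

end

fun incs :: "'v \<Rightarrow> ('v \<times> 'v) list \<Rightarrow> 'v \<Rightarrow> ('v \<times> 'v) list" where
  "incs u [] z = [(z, u)]"
| "incs u (e # L) z = (fst e, u) # incs (snd e) L z"

lemma incs_fst: "map fst (incs u L z) = map fst L @ [z]"
  by (induction L arbitrary: u) auto
lemma incs_snd: "map snd (incs u L z) = u # map snd L"
  by (induction L arbitrary: u) auto
lemma incs_length: "length (incs u L z) = Suc (length L)"
  by (induction L arbitrary: u) auto

lemma cnt_sum_fst:
  assumes "finite B" "snd ` set xs \<subseteq> B"
  shows "(\<Sum>b\<in>B. real (count_list xs (a, b))) = real (count_list (map fst xs) a)"
  using assms(2)
proof (induction xs)
  case Nil then show ?case by simp
next
  case (Cons p xs)
  have "(\<Sum>b\<in>B. real (count_list (p # xs) (a, b))) = (\<Sum>b\<in>B. real (count_list xs (a, b)) + (if b = snd p \<and> fst p = a then 1 else 0))"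
    by (rule sum.cong) (auto simp: prod_eq_iff)
  also have "\<dots> = (\<Sum>b\<in>B. real (count_list xs (a, b))) + (\<Sum>b\<in>B. (if b = snd p \<and> fst p = a then 1 else 0))"
    by (rule sum.distrib)
  also have "(\<Sum>b\<in>B. (if b = snd p \<and> fst p = a then 1 else (0::real))) = (if fst p = a then 1 else 0)"
    using Cons.prems assms(1) by (simp add: sum.delta')
  finally show ?case using Cons by auto
qed

lemma cnt_sum_snd:
  assumes "finite A" "fst ` set xs \<subseteq> A"
  shows "(\<Sum>a\<in>A. real (count_list xs (a, b))) = real (count_list (map snd xs) b)"
  using assms(2)
proof (induction xs)
  case Nil then show ?case by simp
next
  case (Cons p xs)
  have "(\<Sum>a\<in>A. real (count_list (p # xs) (a, b))) = (\<Sum>a\<in>A. real (count_list xs (a, b)) + (if a = fst p \<and> snd p = b then 1 else 0))"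
    by (rule sum.cong) (auto simp: prod_eq_iff)
  also have "\<dots> = (\<Sum>a\<in>A. real (count_list xs (a, b))) + (\<Sum>a\<in>A. (if a = fst p \<and> snd p = b then 1 else 0))"
    by (rule sum.distrib)
  also have "(\<Sum>a\<in>A. (if a = fst p \<and> snd p = b then 1 else (0::real))) = (if snd p = b then 1 else 0)"
    using Cons.prems assms(1) by (simp add: sum.delta')
  finally show ?case using Cons by auto
qed

lemma sl_count:
  fixes f :: "'a \<Rightarrow> real"
  assumes "finite X" "set xs \<subseteq> X"
  shows "sum_list (map f xs) = (\<Sum>p\<in>X. real (count_list xs p) * f p)"
  using assms(2)
proof (induction xs)
  case Nil then show ?case by simp
next
  case (Cons a xs)
  have "(\<Sum>p\<in>X. real (count_list (a # xs) p) * f p) = (\<Sum>p\<in>X. real (count_list xs p) * f p + (if p = a then f p else 0))"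
    by (rule sum.cong) (auto simp: algebra_simps)
  also have "\<dots> = (\<Sum>p\<in>X. real (count_list xs p) * f p) + f a"
    using Cons.prems assms(1) by (simp add: sum.distrib sum.delta')
  finally show ?case using Cons by simp
qed

lemma cnt_filter_fst: "a \<noteq> x \<Longrightarrow> count_list (map fst (filter (\<lambda>p. p \<noteq> (x, y)) xs)) a = count_list (map fst xs) a"
  by (induction xs) auto
lemma cnt_filter_snd: "b \<noteq> y \<Longrightarrow> count_list (map snd (filter (\<lambda>p. p \<noteq> (x, y)) xs)) b = count_list (map snd xs) b"
  by (induction xs) auto
lemma sl_filter: "f (x, y) = (0::real) \<Longrightarrow> sum_list (map f (filter (\<lambda>p. p \<noteq> (x, y)) xs)) = sum_list (map f xs)"
  by (induction xs) auto
lemma sl_minus: "sum_list (map (\<lambda>p. K - g p) xs) = real (length xs) * K - sum_list (map g xs)"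
  by (induction xs) (auto simp: algebra_simps)

context gr begin

definition "ddp p = dr (fst p) (snd p)"
definition "pv u L z = sum_list (map ddp L) - sum_list (map ddp (incs u L z))"

lemma pv_Nil: "pv u [] z = - dr z u" by (simp add: pv_def ddp_def)
lemma pv_Cons: "pv u ((a, b) # L) z = dr a b - dr a u + pv b L z" by (simp add: pv_def ddp_def)

lemma pv_lip: "pv u L z \<le> pv u L w + dr w z"
proof (induction L arbitrary: u)
  case Nil
  show ?case using dr_tri[of w u z] dr_sym[of z u] dr_sym[of w u] by (simp add: pv_Nil)
next
  case (Cons e L)
  obtain a b where "e = (a, b)" by (cases e)
  then show ?case using Cons[of b] by (simp add: pv_Cons)
qed

lemma pv_start: "pv u L z \<le> pv w L z + dr u w"
proof (cases L)
  case Nil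
  then show ?thesis using dr_tri[of z w u] by (simp add: pv_Nil)
next
  case (Cons e L')
  obtain a b where "e = (a, b)" by (cases e)
  then show ?thesis using Cons dr_tri[of a w u] by (simp add: pv_Cons dr_sym[of w u])
qed

lemma pv_snoc: "pv u (L @ [(a, b)]) b = pv u L a + dr a b"
proof (induction L arbitrary: u)
  case Nil then show ?case by (simp add: pv_Cons pv_Nil)
next
  case (Cons e L)
  obtain a' b' where "e = (a', b')" by (cases e)
  then show ?case using Cons[of b'] by (simp add: pv_Cons)
qed

lemma pcost_eq: "plan_cost q x y \<tau> = infsum (\<lambda>p. \<tau> p * (dr x y - ddp p)) UNIV"
  unfolding plan_cost_def by (simp add: case_prod_unfold dr_def ddp_def)

end

locale plan = gr q for q :: "'v \<Rightarrow> 'v \<Rightarrow> real" +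
  fixes x y :: 'v and \<rho> :: "'v \<times> 'v \<Rightarrow> real"
  assumes opt: "optimal_plan q x y \<rho>" and fin: "finite {p. \<rho> p > 0}"
begin

definition "EE = {p. \<rho> p > 0} \<union> {(x, y)}"
abbreviation "Fs \<equiv> {p. \<rho> p > 0}"

lemma tp: "transport_plan q x y \<rho>" using opt by (simp add: optimal_plan_def)
lemma rho_nonneg: "\<rho> p \<ge> 0" using tp unfolding transport_plan_def by (cases p) auto
lemma rho_zero: "p \<notin> Fs \<Longrightarrow> \<rho> p = 0" using rho_nonneg[of p] by simp
lemma row: "a \<noteq> x \<Longrightarrow> ((\<lambda>b. \<rho> (a, b)) has_sum q x a) UNIV" using tp by (simp add: transport_plan_def)
lemma col: "b \<noteq> y \<Longrightarrow> ((\<lambda>a. \<rho> (a, b)) has_sum q y b) UNIV" using tp by (simp add: transport_plan_def)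

lemma cost_fin: "plan_cost q x y \<rho> = (\<Sum>p\<in>Fs. \<rho> p * (dr x y - ddp p))"
proof -
  have z: "\<rho> p * (dr x y - ddp p) = 0" if "p \<notin> Fs" for p using rho_zero[OF that] by simp
  show ?thesis unfolding pcost_eq using infsum_fin_supp[OF fin z, where A=UNIV] by simp
qed

lemma nopos:
  assumes e0: "e0 \<in> EE" and L: "set L \<subseteq> EE"
  shows "ddp e0 + pv (snd e0) L (fst e0) \<le> 0"
proof (rule ccontr)
  assume "\<not> ?thesis"
  then have W: "ddp e0 + pv (snd e0) L (fst e0) > 0" by simp
  define C where "C = e0 # L"
  define inc where "inc = incs (snd e0) L (fst e0)"
  define dec where "dec = filter (\<lambda>p. p \<noteq> (x, y)) C"
  have decF: "set dec \<subseteq> Fs" using e0 L by (auto simp: dec_def C_def EE_def)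
  define \<epsilon> where "\<epsilon> = (if dec = [] then 1 else Min (\<rho> ` set dec) / real (length C))"
  have lenC: "length C > 0" by (simp add: C_def)
  have eps_pos: "\<epsilon> > 0"
  proof (cases "dec = []")
    case False
    have "Min (\<rho> ` set dec) > 0" using decF False by (subst Min_gr_iff) auto
    then show ?thesis using False lenC by (simp add: \<epsilon>_def)
  qed (simp add: \<epsilon>_def)
  define P where "P p = \<epsilon> * real (count_list inc p) - \<epsilon> * real (count_list dec p)" for p
  define \<sigma> where "\<sigma> p = \<rho> p + P p" for p
  have fst_inc: "count_list (map fst inc) a = count_list (map fst C) a" for a
    by (simp add: inc_def C_def incs_fst)
  have snd_inc: "map snd inc = map snd C" by (simp add: inc_def C_def incs_snd)
  have len_inc: "length inc = length C" by (simp add: inc_def C_def incs_length)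
  have sig_nonneg: "\<sigma> p \<ge> 0" for p
  proof (cases "p \<in> set dec")
    case False
    then show ?thesis using rho_nonneg[of p] eps_pos by (simp add: \<sigma>_def P_def)
  next
    case True
    then have ne: "dec \<noteq> []" by auto
    have "Min (\<rho> ` set dec) \<le> \<rho> p" using True by simp
    have "count_list dec p \<le> length C"
      using count_le_length[of dec p] length_filter_le[of "\<lambda>p. p \<noteq> (x, y)" C] unfolding dec_def by linarith
    then have "real (count_list dec p) \<le> real (length C)" by simp
    then have "\<epsilon> * real (count_list dec p) \<le> \<epsilon> * real (length C)"
      by (rule mult_left_mono) (use eps_pos in auto)
    also have "\<dots> = Min (\<rho> ` set dec)" using ne lenC by (simp add: \<epsilon>_def)
    also have "\<dots> \<le> \<rho> p" using True by simp
    finally have "\<epsilon> * real (count_list dec p) \<le> \<rho> p" .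
    moreover have "0 \<le> \<epsilon> * real (count_list inc p)" using eps_pos by simp
    ultimately show ?thesis unfolding \<sigma>_def P_def by linarith
  qed
  have s2: "((\<lambda>b. \<sigma> (a, b)) has_sum q x a) UNIV" if a: "a \<noteq> x" for a
  proof -
    define G where "G = snd ` set (inc @ dec)"
    have fG: "finite G" by (simp add: G_def)
    have "((\<lambda>b. P (a, b)) has_sum 0) UNIV"
    proof (subst has_sum_fin_supp[OF fG])
      show "P (a, b) = 0" if "b \<notin> G" for b
      proof -
        have "(a, b) \<notin> set inc" "(a, b) \<notin> set dec" using that by (force simp: G_def)+
        then show ?thesis by (simp add: P_def)
      qed
      have "(\<Sum>b\<in>G. P (a, b)) = \<epsilon> * (\<Sum>b\<in>G. real (count_list inc (a, b))) - \<epsilon> * (\<Sum>b\<in>G. real (count_list dec (a, b)))"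
        by (simp add: P_def sum_subtractf sum_distrib_left)
      also have "\<dots> = \<epsilon> * real (count_list (map fst inc) a) - \<epsilon> * real (count_list (map fst dec) a)"
      proof -
        have i1: "(\<Sum>b\<in>G. real (count_list inc (a, b))) = real (count_list (map fst inc) a)"
          by (rule cnt_sum_fst[OF fG]) (auto simp: G_def)
        have i2: "(\<Sum>b\<in>G. real (count_list dec (a, b))) = real (count_list (map fst dec) a)"
          by (rule cnt_sum_fst[OF fG]) (auto simp: G_def)
        show ?thesis unfolding i1 i2 ..
      qed
      also have "\<dots> = 0" using a by (simp add: fst_inc dec_def cnt_filter_fst)
      finally show "0 = (\<Sum>b\<in>G. P (a, b))" by simp
    qed
    from has_sum_add[OF row[OF a] this] show "((\<lambda>b. \<sigma> (a, b)) has_sum q x a) UNIV"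
      by (simp add: \<sigma>_def)
  qed
  have s3: "((\<lambda>a. \<sigma> (a, b)) has_sum q y b) UNIV" if b: "b \<noteq> y" for b
  proof -
    define G where "G = fst ` set (inc @ dec)"
    have fG: "finite G" by (simp add: G_def)
    have "((\<lambda>a. P (a, b)) has_sum 0) UNIV"
    proof (subst has_sum_fin_supp[OF fG])
      show "P (a, b) = 0" if "a \<notin> G" for a
      proof -
        have "(a, b) \<notin> set inc" "(a, b) \<notin> set dec" using that by (force simp: G_def)+
        then show ?thesis by (simp add: P_def)
      qed
      have "(\<Sum>a\<in>G. P (a, b)) = \<epsilon> * (\<Sum>a\<in>G. real (count_list inc (a, b))) - \<epsilon> * (\<Sum>a\<in>G. real (count_list dec (a, b)))"
        by (simp add: P_def sum_subtractf sum_distrib_left)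
      also have "\<dots> = \<epsilon> * real (count_list (map snd inc) b) - \<epsilon> * real (count_list (map snd dec) b)"
      proof -
        have i1: "(\<Sum>a\<in>G. real (count_list inc (a, b))) = real (count_list (map snd inc) b)"
          by (rule cnt_sum_snd[OF fG]) (auto simp: G_def)
        have i2: "(\<Sum>a\<in>G. real (count_list dec (a, b))) = real (count_list (map snd dec) b)"
          by (rule cnt_sum_snd[OF fG]) (auto simp: G_def)
        show ?thesis unfolding i1 i2 ..
      qed
      also have "\<dots> = 0" using b by (simp add: snd_inc dec_def cnt_filter_snd)
      finally show "0 = (\<Sum>a\<in>G. P (a, b))" by simp
    qed
    from has_sum_add[OF col[OF b] this] show "((\<lambda>a. \<sigma> (a, b)) has_sum q y b) UNIV"
      by (simp add: \<sigma>_def)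
  qed
  have tp_sig: "transport_plan q x y \<sigma>"
    unfolding transport_plan_def using sig_nonneg s2 s3 by blast
  define c where "c p = dr x y - ddp p" for p
  define G where "G = Fs \<union> set inc \<union> set dec"
  have fG: "finite G" using fin by (simp add: G_def)
  have c_xy: "c (x, y) = 0" by (simp add: c_def ddp_def)
  have zs: "\<sigma> z * c z = 0" if "z \<notin> G" for z
  proof -
    have "z \<notin> Fs" using that by (auto simp: G_def)
    then have "\<rho> z = 0" by (rule rho_zero)
    moreover have "count_list inc z = 0" "count_list dec z = 0" using that by (auto simp: G_def)
    ultimately show ?thesis by (simp add: \<sigma>_def P_def)
  qed
  have zr: "\<rho> z * c z = 0" if "z \<notin> G" for z
  proof -
    have "z \<notin> Fs" using that by (auto simp: G_def)
    then have "\<rho> z = 0" by (rule rho_zero)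
    then show ?thesis by simp
  qed
  have cs: "plan_cost q x y \<sigma> = (\<Sum>p\<in>G. \<sigma> p * c p)"
    unfolding pcost_eq c_def[symmetric] using infsum_fin_supp[OF fG zs, where A=UNIV] by simp
  have cr: "plan_cost q x y \<rho> = (\<Sum>p\<in>G. \<rho> p * c p)"
    unfolding pcost_eq c_def[symmetric] using infsum_fin_supp[OF fG zr, where A=UNIV] by simp
  have "(\<Sum>p\<in>G. \<sigma> p * c p) = (\<Sum>p\<in>G. \<rho> p * c p) + \<epsilon> * (\<Sum>p\<in>G. real (count_list inc p) * c p) - \<epsilon> * (\<Sum>p\<in>G. real (count_list dec p) * c p)"
    by (simp add: \<sigma>_def P_def algebra_simps sum.distrib sum_subtractf sum_distrib_left)
  also have "(\<Sum>p\<in>G. real (count_list inc p) * c p) = sum_list (map c inc)"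
    by (rule sl_count[symmetric]) (use fG in \<open>auto simp: G_def\<close>)
  also have "(\<Sum>p\<in>G. real (count_list dec p) * c p) = sum_list (map c dec)"
    by (rule sl_count[symmetric]) (use fG in \<open>auto simp: G_def\<close>)
  also have "sum_list (map c dec) = sum_list (map c C)"
    unfolding dec_def by (rule sl_filter[where f=c and x=x and y=y, OF c_xy])
  finally have "plan_cost q x y \<sigma> = plan_cost q x y \<rho> + \<epsilon> * (sum_list (map c inc) - sum_list (map c C))"
    using cs cr by (simp add: algebra_simps)
  also have "sum_list (map c inc) - sum_list (map c C) = sum_list (map ddp C) - sum_list (map ddp inc)"
    unfolding c_def sl_minus len_inc by simp
  also have "\<dots> = ddp e0 + pv (snd e0) L (fst e0)"
    by (simp add: C_def inc_def pv_def)
  finally have "plan_cost q x y \<sigma> > plan_cost q x y \<rho>" using W eps_pos by simp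
  moreover have "plan_cost q x y \<sigma> \<le> plan_cost q x y \<rho>" using opt tp_sig by (simp add: optimal_plan_def)
  ultimately show False by simp
qed

end

context gr begin

lemma lip_of_adm:
  assumes "\<forall>a b. a \<noteq> b \<longrightarrow> \<bar>grad q a b g\<bar> \<le> 1"
  shows "\<bar>g a - g b\<bar> \<le> dr a b"
proof (cases "a = b")
  case True then show ?thesis by simp
next
  case False
  have pos: "dr a b > 0" using dr_pos[OF False] .
  have "\<bar>(g a - g b) / dr a b\<bar> \<le> 1" using assms False by (simp add: grad_def dr_def)
  then have "\<bar>g a - g b\<bar> / dr a b \<le> 1" using pos by (simp add: abs_divide)
  then show ?thesis using pos by (simp add: pos_divide_le_eq)
qed

lemma lap_abs_bound:
  assumes "\<forall>a b. a \<noteq> b \<longrightarrow> \<bar>grad q a b g\<bar> \<le> 1"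
  shows "\<bar>laplacian q g x\<bar> \<le> (\<Sum>a\<in>{a. q x a > 0}. q x a)"
proof -
  have "\<bar>laplacian q g x\<bar> \<le> (\<Sum>a\<in>{a. q x a > 0}. \<bar>q x a * (g a - g x)\<bar>)"
    unfolding laplacian_def by (rule sum_abs)
  also have "\<dots> \<le> (\<Sum>a\<in>{a. q x a > 0}. q x a)"
  proof (rule sum_mono)
    fix a assume a: "a \<in> {a. q x a > 0}"
    have "\<bar>g a - g x\<bar> \<le> dr a x" by (rule lip_of_adm[OF assms])
    also have "dr a x \<le> 1" using d_edge[of x a] a dr_sym[of a x] by (simp add: dr_def)
    finally have "\<bar>g a - g x\<bar> \<le> 1" .
    then have "q x a * \<bar>g a - g x\<bar> \<le> q x a * 1" by (rule mult_left_mono) (use q_nonneg in auto)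
    then show "\<bar>q x a * (g a - g x)\<bar> \<le> q x a" using q_nonneg[of x a] by (simp add: abs_mult)
  qed
  finally show ?thesis .
qed

lemma diag_cost:
  assumes "optimal_plan q x x \<rho>"
  shows "plan_cost q x x \<rho> \<ge> 0"
proof -
  define \<sigma> where "\<sigma> p = (if fst p = snd p then q x (fst p) else 0)" for p
  have tp: "transport_plan q x x \<sigma>"
    unfolding transport_plan_def
  proof (intro conjI allI impI)
    show "0 \<le> \<sigma> p" for p using q_nonneg by (simp add: \<sigma>_def)
    show "((\<lambda>b. \<sigma> (a, b)) has_sum q x a) UNIV" for a
      by (subst has_sum_fin_supp[of "{a}"]) (auto simp: \<sigma>_def)
    show "((\<lambda>a. \<sigma> (a, b)) has_sum q x b) UNIV" for b
      by (subst has_sum_fin_supp[of "{b}"]) (auto simp: \<sigma>_def)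
  qed
  have "plan_cost q x x \<sigma> = 0"
    unfolding pcost_eq by (rule infsum_0) (auto simp: \<sigma>_def ddp_def)
  then show ?thesis using assms tp by (auto simp: optimal_plan_def)
qed

end

context plan begin

lemma lap_x: "laplacian q f x = (\<Sum>p\<in>Fs. \<rho> p * (f (fst p) - f x))"
proof -
  define A where "A = fst ` Fs \<union> {a. q x a > 0}"
  define B where "B = snd ` Fs"
  have fA: "finite A" using fin fin_nb by (simp add: A_def)
  have fB: "finite B" using fin by (simp add: B_def)
  have sub: "Fs \<subseteq> A \<times> B" by (force simp: A_def B_def)
  have "(\<Sum>p\<in>Fs. \<rho> p * (f (fst p) - f x)) = (\<Sum>p\<in>A \<times> B. \<rho> p * (f (fst p) - f x))"
  proof (rule sum.mono_neutral_left)
    show "finite (A \<times> B)" using fA fB by simp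
    show "Fs \<subseteq> A \<times> B" by (rule sub)
    show "\<forall>p\<in>A \<times> B - Fs. \<rho> p * (f (fst p) - f x) = 0"
    proof
      fix p assume "p \<in> A \<times> B - Fs"
      then have "p \<notin> Fs" by simp
      then have "\<rho> p = 0" by (rule rho_zero)
      then show "\<rho> p * (f (fst p) - f x) = 0" by simp
    qed
  qed
  also have "\<dots> = (\<Sum>a\<in>A. \<Sum>b\<in>B. \<rho> (a, b) * (f a - f x))"
    by (simp add: sum.cartesian_product case_prod_unfold)
  also have "\<dots> = (\<Sum>a\<in>A. q x a * (f a - f x))"
  proof (rule sum.cong[OF refl])
    fix a assume "a \<in> A"
    show "(\<Sum>b\<in>B. \<rho> (a, b) * (f a - f x)) = q x a * (f a - f x)"
    proof (cases "a = x")
      case True then show ?thesis by simp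
    next
      case False
      have z: "\<rho> (a, b) = 0" if "b \<notin> B" for b
      proof -
        have "(a, b) \<notin> Fs"
        proof
          assume "(a, b) \<in> Fs"
          then have "snd (a, b) \<in> snd ` Fs" by (rule imageI)
          then have "b \<in> B" by (simp add: B_def)
          then show False using that by simp
        qed
        then show ?thesis by (rule rho_zero)
      qed
      have h: "((\<lambda>b. \<rho> (a, b)) has_sum q x a) UNIV" by (rule row[OF False])
      have h2: "((\<lambda>b. \<rho> (a, b)) has_sum (\<Sum>b\<in>B. \<rho> (a, b))) UNIV"
        by (rule has_sum_finite_neutralI[OF fB]) (use z in auto)
      have "q x a = (\<Sum>b\<in>B. \<rho> (a, b))" using has_sum_unique[OF h h2] .
      then show ?thesis by (simp add: sum_distrib_right)
    qed
  qed
  also have "\<dots> = laplacian q f x"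
    unfolding laplacian_def
  proof (rule sum.mono_neutral_right)
    show "finite A" by (rule fA)
    show "{a. q x a > 0} \<subseteq> A" by (auto simp: A_def)
    show "\<forall>a\<in>A - {a. q x a > 0}. q x a * (f a - f x) = 0"
    proof
      fix a assume "a \<in> A - {a. q x a > 0}"
      then have "\<not> q x a > 0" by simp
      then have "q x a = 0" using q_nonneg[of x a] by linarith
      then show "q x a * (f a - f x) = 0" by simp
    qed
  qed
  finally show ?thesis ..
qed

lemma lap_y: "laplacian q f y = (\<Sum>p\<in>Fs. \<rho> p * (f (snd p) - f y))"
proof -
  define A where "A = fst ` Fs"
  define B where "B = snd ` Fs \<union> {b. q y b > 0}"
  have fA: "finite A" using fin by (simp add: A_def)
  have fB: "finite B" using fin fin_nb by (simp add: B_def)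
  have sub: "Fs \<subseteq> A \<times> B" by (force simp: A_def B_def)
  have "(\<Sum>p\<in>Fs. \<rho> p * (f (snd p) - f y)) = (\<Sum>p\<in>A \<times> B. \<rho> p * (f (snd p) - f y))"
  proof (rule sum.mono_neutral_left)
    show "finite (A \<times> B)" using fA fB by simp
    show "Fs \<subseteq> A \<times> B" by (rule sub)
    show "\<forall>p\<in>A \<times> B - Fs. \<rho> p * (f (snd p) - f y) = 0"
    proof
      fix p assume "p \<in> A \<times> B - Fs"
      then have "p \<notin> Fs" by simp
      then have "\<rho> p = 0" by (rule rho_zero)
      then show "\<rho> p * (f (snd p) - f y) = 0" by simp
    qed
  qed
  also have "\<dots> = (\<Sum>b\<in>B. \<Sum>a\<in>A. \<rho> (a, b) * (f b - f y))"
    by (subst sum.swap) (simp add: sum.cartesian_product case_prod_unfold)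
  also have "\<dots> = (\<Sum>b\<in>B. q y b * (f b - f y))"
  proof (rule sum.cong[OF refl])
    fix b assume "b \<in> B"
    show "(\<Sum>a\<in>A. \<rho> (a, b) * (f b - f y)) = q y b * (f b - f y)"
    proof (cases "b = y")
      case True then show ?thesis by simp
    next
      case False
      have z: "\<rho> (a, b) = 0" if "a \<notin> A" for a
      proof -
        have "(a, b) \<notin> Fs"
        proof
          assume "(a, b) \<in> Fs"
          then have "fst (a, b) \<in> fst ` Fs" by (rule imageI)
          then have "a \<in> A" by (simp add: A_def)
          then show False using that by simp
        qed
        then show ?thesis by (rule rho_zero)
      qed
      have h: "((\<lambda>a. \<rho> (a, b)) has_sum q y b) UNIV" by (rule col[OF False])
      have h2: "((\<lambda>a. \<rho> (a, b)) has_sum (\<Sum>a\<in>A. \<rho> (a, b))) UNIV"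
        by (rule has_sum_finite_neutralI[OF fA]) (use z in auto)
      have "q y b = (\<Sum>a\<in>A. \<rho> (a, b))" using has_sum_unique[OF h h2] .
      then show ?thesis by (simp add: sum_distrib_right)
    qed
  qed
  also have "\<dots> = laplacian q f y"
    unfolding laplacian_def
  proof (rule sum.mono_neutral_right)
    show "finite B" by (rule fB)
    show "{b. q y b > 0} \<subseteq> B" by (auto simp: B_def)
    show "\<forall>b\<in>B - {b. q y b > 0}. q y b * (f b - f y) = 0"
    proof
      fix b assume "b \<in> B - {b. q y b > 0}"
      then have "\<not> q y b > 0" by simp
      then have "q y b = 0" using q_nonneg[of y b] by linarith
      then show "q y b * (f b - f y) = 0" by simp
    qed
  qed
  finally show ?thesis ..
qed

definition "fpot z = Sup {pv x L z | L. set L \<subseteq> EE}"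

lemma xyE: "(x, y) \<in> EE" by (simp add: EE_def)

lemma pv_bound: "set L \<subseteq> EE \<Longrightarrow> pv x L z \<le> dr x z"
proof -
  assume L: "set L \<subseteq> EE"
  have "pv x L z \<le> pv y L z + dr x y" by (rule pv_start)
  also have "pv y L z \<le> pv y L x + dr x z" by (rule pv_lip)
  moreover have "ddp (x, y) + pv y L x \<le> 0" using nopos[OF xyE L] by simp
  ultimately show ?thesis by (simp add: ddp_def)
qed

lemma pset_mem: "set L \<subseteq> EE \<Longrightarrow> pv x L z \<in> {pv x L z | L. set L \<subseteq> EE}"
  by (rule CollectI, rule exI[of _ L]) simp

lemma pset_ne: "{pv x L z | L. set L \<subseteq> EE} \<noteq> {}"
proof -
  have "pv x [] z \<in> {pv x L z | L. set L \<subseteq> EE}" by (rule pset_mem) simp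
  then show ?thesis by (metis empty_iff)
qed

lemma pset_bdd: "bdd_above {pv x L z | L. set L \<subseteq> EE}"
proof (rule bdd_aboveI[of _ "dr x z"])
  fix v assume "v \<in> {pv x L z | L. set L \<subseteq> EE}"
  then obtain L where L: "set L \<subseteq> EE" "v = pv x L z" by (auto simp only: mem_Collect_eq)
  then show "v \<le> dr x z" using pv_bound[OF L(1)] by simp
qed

lemma fpot_ge: "set L \<subseteq> EE \<Longrightarrow> pv x L z \<le> fpot z"
  unfolding fpot_def by (rule cSup_upper[OF pset_mem pset_bdd])

lemma fpot_lip: "fpot z \<le> fpot w + dr w z"
proof -
  have "fpot z \<le> fpot w + dr w z"
    unfolding fpot_def[of z]
  proof (rule cSup_least[OF pset_ne])
    fix v assume "v \<in> {pv x L z | L. set L \<subseteq> EE}"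
    then obtain L where L: "set L \<subseteq> EE" "v = pv x L z" by (auto simp only: mem_Collect_eq)
    have "pv x L z \<le> pv x L w + dr w z" by (rule pv_lip)
    also have "pv x L w \<le> fpot w" by (rule fpot_ge[OF L(1)])
    finally show "v \<le> fpot w + dr w z" using L by simp
  qed
  then show ?thesis .
qed

lemma fpot_tight:
  assumes ab: "(a, b) \<in> EE"
  shows "fpot b - fpot a = dr a b"
proof -
  have "fpot a \<le> fpot b - dr a b"
    unfolding fpot_def[of a]
  proof (rule cSup_least[OF pset_ne])
    fix v assume "v \<in> {pv x L a | L. set L \<subseteq> EE}"
    then obtain L where L: "set L \<subseteq> EE" "v = pv x L a" by (auto simp only: mem_Collect_eq)
    have L2: "set (L @ [(a, b)]) \<subseteq> EE" using L ab by auto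
    have "pv x L a = pv x (L @ [(a, b)]) b - dr a b" by (simp add: pv_snoc)
    also have "\<dots> \<le> fpot b - dr a b" using fpot_ge[OF L2] by simp
    finally show "v \<le> fpot b - dr a b" using L by simp
  qed
  moreover have "fpot b \<le> fpot a + dr a b" by (rule fpot_lip)
  ultimately show ?thesis by simp
qed

lemma cost_nonneg:
  assumes no: "nonneg_ollivier q" and xy: "x \<noteq> y"
  shows "plan_cost q x y \<rho> \<ge> 0"
proof -
  let ?f = fpot
  have pos: "dr x y > 0" by (rule dr_pos[OF xy])
  have adm1: "\<forall>a b. a \<noteq> b \<longrightarrow> \<bar>grad q a b ?f\<bar> \<le> 1"
  proof (intro allI impI)
    fix a b :: 'v assume ab: "a \<noteq> b"
    have p: "dr a b > 0" by (rule dr_pos[OF ab])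
    have "?f a \<le> ?f b + dr a b" using fpot_lip[of a b] dr_sym[of b a] by simp
    moreover have "?f b \<le> ?f a + dr a b" using fpot_lip[of b a] by simp
    ultimately have "\<bar>?f a - ?f b\<bar> \<le> dr a b" by simp
    then have "\<bar>?f a - ?f b\<bar> / dr a b \<le> 1" using p by (simp add: pos_divide_le_eq)
    then show "\<bar>grad q a b ?f\<bar> \<le> 1" using p by (simp add: grad_def dr_def[symmetric] abs_divide)
  qed
  have adm2: "grad q y x ?f = 1"
  proof -
    have "?f y - ?f x = dr x y" by (rule fpot_tight[OF xyE])
    then show ?thesis using pos dr_sym[of y x] by (simp add: grad_def dr_def[symmetric])
  qed
  let ?S = "{grad q x y (laplacian q f) | f. (\<forall>a b. a \<noteq> b \<longrightarrow> \<bar>grad q a b f\<bar> \<le> 1) \<and> grad q y x f = 1}"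
  have mem: "grad q x y (laplacian q ?f) \<in> ?S" using adm1 adm2 by blast
  have bdd: "bdd_below ?S"
  proof (rule bdd_belowI[of _ "- ((\<Sum>a\<in>{a. q x a > 0}. q x a) + (\<Sum>b\<in>{b. q y b > 0}. q y b)) / dr x y"])
    fix s assume "s \<in> ?S"
    then obtain g where g: "\<forall>a b. a \<noteq> b \<longrightarrow> \<bar>grad q a b g\<bar> \<le> 1" and s: "s = grad q x y (laplacian q g)" by blast
    have "\<bar>laplacian q g x\<bar> \<le> (\<Sum>a\<in>{a. q x a > 0}. q x a)" by (rule lap_abs_bound[OF g])
    moreover have "\<bar>laplacian q g y\<bar> \<le> (\<Sum>b\<in>{b. q y b > 0}. q y b)" by (rule lap_abs_bound[OF g])
    ultimately have "- ((\<Sum>a\<in>{a. q x a > 0}. q x a) + (\<Sum>b\<in>{b. q y b > 0}. q y b)) \<le> laplacian q g x - laplacian q g y"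
      by linarith
    then show "- ((\<Sum>a\<in>{a. q x a > 0}. q x a) + (\<Sum>b\<in>{b. q y b > 0}. q y b)) / dr x y \<le> s"
      using pos by (simp add: s grad_def dr_def[symmetric] divide_right_mono)
  qed
  have "0 \<le> ollivier_curvature q x y" using no xy by (simp add: nonneg_ollivier_def)
  also have "ollivier_curvature q x y \<le> grad q x y (laplacian q ?f)"
    unfolding ollivier_curvature_def by (rule cInf_lower[OF mem bdd])
  also have "grad q x y (laplacian q ?f) = (laplacian q ?f x - laplacian q ?f y) / dr x y"
    by (simp add: grad_def dr_def)
  also have "laplacian q ?f x - laplacian q ?f y = plan_cost q x y \<rho>"
  proof -
    have "laplacian q ?f x - laplacian q ?f y = (\<Sum>p\<in>Fs. \<rho> p * (?f (fst p) - ?f x) - \<rho> p * (?f (snd p) - ?f y))"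
      unfolding lap_x lap_y by (rule sum_subtractf[symmetric])
    also have "\<dots> = (\<Sum>p\<in>Fs. \<rho> p * (dr x y - ddp p))"
    proof (rule sum.cong[OF refl])
      fix p assume p: "p \<in> Fs"
      obtain a b where ab: "p = (a, b)" by (cases p)
      have "(a, b) \<in> EE" using p ab by (simp add: EE_def)
      then have "?f b - ?f a = dr a b" by (rule fpot_tight)
      moreover have "?f y - ?f x = dr x y" by (rule fpot_tight[OF xyE])
      ultimately show "\<rho> p * (?f (fst p) - ?f x) - \<rho> p * (?f (snd p) - ?f y) = \<rho> p * (dr x y - ddp p)"
        by (simp add: ab ddp_def algebra_simps)
    qed
    finally show ?thesis by (simp add: cost_fin)
  qed
  finally have "0 \<le> plan_cost q x y \<rho> / dr x y" .
  then show ?thesis using pos by (simp add: zero_le_divide_iff)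
qed

end

theorem mainTheorem7:
  fixes q :: "'v \<Rightarrow> 'v \<Rightarrow> real"
    and qt :: "'v \<times> 'v \<Rightarrow> 'v \<times> 'v \<Rightarrow> real"
  assumes "is_graph q" and "reversible q" and "connected_graph q"
    and "nonneg_ollivier q"
    and "perfect_coupling q qt"
    and "t > 0"
  shows "\<exists>D. ((\<lambda>s. phi (qmin q) s (gdist q x y)) has_real_derivative D) (at t) \<and>
             D \<ge> laplacian qt (\<lambda>(a, b). phi (qmin q) t (gdist q a b)) (x, y)"
proof -
  interpret gr q using assms(1-3) by unfold_locales
  define c where "c = qmin q"
  define r where "r = 2 * max c 0"
  have r0: "r \<ge> 0" by (simp add: r_def)
  define n0 where "n0 = gdist q x y"
  define \<phi> where "\<phi> m = expo (LL r) t f0 m" for m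
  have phi_eq: "phi c s m = expo (LL r) s f0 m" for s m by (simp add: r_def phi_expo)
  define D where "D = LL r \<phi> n0"
  have deriv: "((\<lambda>s. phi (qmin q) s (gdist q x y)) has_real_derivative D) (at t)"
  proof -
    have "(\<lambda>s. phi (qmin q) s (gdist q x y)) = (\<lambda>s. expo (LL r) s f0 n0)"
      unfolding c_def[symmetric] n0_def[symmetric] by (rule ext) (rule phi_eq)
    moreover have "((\<lambda>s. expo (LL r) s f0 n0) has_real_derivative LL r (expo (LL r) t f0) n0) (at t)"
      by (rule phi_deriv[OF r0])
    ultimately show ?thesis by (simp add: D_def \<phi>_def[abs_def])
  qed
  have pc: "perfect_coupling q qt" by fact
  have cg: "coupling_graph q qt" using pc by (simp add: perfect_coupling_def)
  have isgt: "is_graph qt" using cg by (simp add: coupling_graph_def)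
  define \<rho> where "\<rho> = qt (x, y)"
  have opt: "optimal_plan q x y \<rho>" using pc by (simp add: perfect_coupling_def \<rho>_def)
  have fin: "finite {p. \<rho> p > 0}" using isgt by (simp add: is_graph_def \<rho>_def)
  interpret plan q x y \<rho> using opt fin by unfold_locales
  define K where "K k = {p. int (gdist q (fst p) (snd p)) - int n0 = k}" for k
  define \<mu> where "\<mu> k = (\<Sum>p\<in>Fs \<inter> K k. \<rho> p)" for k
  have mu_eq: "plan_mu q x y \<rho> k = \<mu> k" for k
  proof -
    have "plan_mu q x y \<rho> k = infsum \<rho> (K k)"
      unfolding plan_mu_def K_def n0_def by (simp add: case_prod_unfold)
    also have "\<dots> = sum \<rho> (K k \<inter> Fs)" by (rule infsum_fin_supp[OF fin]) (rule rho_zero)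
    finally show ?thesis by (simp add: \<mu>_def Int_commute)
  qed
  have mu_nonneg: "\<mu> k \<ge> 0" for k unfolding \<mu>_def by (rule sum_nonneg) (use rho_nonneg in auto)
  have supp: "\<bar>int (gdist q (fst p) (snd p)) - int n0\<bar> \<le> 1" if p: "p \<in> Fs" for p
  proof (rule ccontr)
    define k where "k = int (gdist q (fst p) (snd p)) - int n0"
    assume "\<not> ?thesis"
    then have "\<bar>k\<bar> > 1" by (simp add: k_def)
    then have "plan_mu q x y \<rho> k = 0" using pc by (simp add: perfect_coupling_def \<rho>_def)
    then have z: "\<mu> k = 0" by (simp add: mu_eq)
    have "\<rho> p \<le> \<mu> k" unfolding \<mu>_def
      by (rule member_le_sum) (use p fin rho_nonneg in \<open>auto simp: K_def k_def\<close>)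
    then show False using z p by simp
  qed
  have lap: "laplacian qt (\<lambda>(a, b). phi (qmin q) t (gdist q a b)) (x, y)
        = \<mu> (-1) * (\<phi> (n0 - 1) - \<phi> n0) + \<mu> 1 * (\<phi> (Suc n0) - \<phi> n0)"
  proof -
    have "laplacian qt (\<lambda>(a, b). phi (qmin q) t (gdist q a b)) (x, y)
        = (\<Sum>p\<in>Fs. \<rho> p * (\<phi> (gdist q (fst p) (snd p)) - \<phi> n0))"
      unfolding laplacian_def \<rho>_def[symmetric]
      by (rule sum.cong) (simp_all add: case_prod_unfold phi_eq c_def[symmetric] \<phi>_def n0_def)
    also have "\<dots> = (\<Sum>p\<in>Fs. (if p \<in> K (-1) then \<rho> p else 0) * (\<phi> (n0 - 1) - \<phi> n0)
                    + (if p \<in> K 1 then \<rho> p else 0) * (\<phi> (Suc n0) - \<phi> n0))"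
    proof (rule sum.cong[OF refl])
      fix p assume p: "p \<in> Fs"
      define m where "m = gdist q (fst p) (snd p)"
      have "\<bar>int m - int n0\<bar> \<le> 1" using supp[OF p] by (simp add: m_def)
      then have "m = n0 \<or> (m = n0 - 1 \<and> n0 > 0) \<or> m = Suc n0" by linarith
      then show "\<rho> p * (\<phi> (gdist q (fst p) (snd p)) - \<phi> n0) = (if p \<in> K (-1) then \<rho> p else 0) * (\<phi> (n0 - 1) - \<phi> n0)
                    + (if p \<in> K 1 then \<rho> p else 0) * (\<phi> (Suc n0) - \<phi> n0)"
        by (auto simp: K_def m_def[symmetric])
    qed
    also have "\<dots> = \<mu> (-1) * (\<phi> (n0 - 1) - \<phi> n0) + \<mu> 1 * (\<phi> (Suc n0) - \<phi> n0)"
      by (simp add: sum.distrib sum_distrib_right[symmetric] \<mu>_def sum.inter_filter[OF fin, symmetric] Int_def)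
    finally show ?thesis .
  qed
  have cost: "plan_cost q x y \<rho> = \<mu> (-1) - \<mu> 1"
  proof -
    have "plan_cost q x y \<rho> = (\<Sum>p\<in>Fs. \<rho> p * (dr x y - ddp p))" by (rule cost_fin)
    also have "\<dots> = (\<Sum>p\<in>Fs. (if p \<in> K (-1) then \<rho> p else 0) - (if p \<in> K 1 then \<rho> p else 0))"
    proof (rule sum.cong[OF refl])
      fix p assume p: "p \<in> Fs"
      define m where "m = gdist q (fst p) (snd p)"
      have "\<bar>int m - int n0\<bar> \<le> 1" using supp[OF p] by (simp add: m_def)
      then have "m = n0 \<or> (m = n0 - 1 \<and> n0 > 0) \<or> m = Suc n0" by linarith
      then show "\<rho> p * (dr x y - ddp p) = (if p \<in> K (-1) then \<rho> p else 0) - (if p \<in> K 1 then \<rho> p else 0)"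
        by (auto simp: K_def m_def[symmetric] dr_def ddp_def n0_def[symmetric] of_nat_diff)
    qed
    also have "\<dots> = \<mu> (-1) - \<mu> 1"
      by (simp add: sum_subtractf \<mu>_def sum.inter_filter[OF fin, symmetric] Int_def)
    finally show ?thesis .
  qed
  have cost0: "plan_cost q x y \<rho> \<ge> 0"
  proof (cases "x = y")
    case True
    then show ?thesis using diag_cost[of x \<rho>] opt by simp
  next
    case False
    then show ?thesis using cost_nonneg[OF assms(4)] by simp
  qed
  have ineq: "laplacian qt (\<lambda>(a, b). phi (qmin q) t (gdist q a b)) (x, y) \<le> D"
  proof (cases "n0 = 0")
    case True
    have "K (-1) = {}" using True by (auto simp: K_def)
    then have "\<mu> (-1) = 0" by (simp add: \<mu>_def)
    then have "\<mu> 1 = 0" using cost cost0 mu_nonneg[of 1] by simp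
    moreover have "D = 0" using True by (simp add: D_def LL_eq)
    ultimately show ?thesis using lap True by simp
  next
    case False
    then have xy: "x \<noteq> y" by (auto simp: n0_def)
    have t0: "t \<ge> 0" using assms(6) by simp
    define a where "a = \<phi> (Suc n0) - \<phi> n0"
    define b where "b = \<phi> n0 - \<phi> (n0 - 1)"
    have a0: "a \<ge> 0" using phi_mono[OF r0 t0, of n0] by (simp add: a_def \<phi>_def)
    have ba: "b \<ge> a"
    proof -
      have "\<phi> (n0 - 1) + \<phi> (Suc (Suc (n0 - 1))) \<le> 2 * \<phi> (Suc (n0 - 1))"
        using phi_concave[OF r0 t0, of "n0 - 1"] by (simp add: \<phi>_def)
      moreover have "Suc (n0 - 1) = n0" using False by simp
      ultimately show ?thesis by (simp add: a_def b_def)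
    qed
    have mum: "\<mu> (-1) \<ge> \<mu> 1" using cost cost0 by simp
    have mur: "\<mu> (-1) \<ge> r"
    proof -
      have "plan_mu q x y \<rho> (-1) \<ge> 2 * qmin q" using pc xy by (simp add: perfect_coupling_def \<rho>_def)
      then have "\<mu> (-1) \<ge> 2 * c" by (simp add: mu_eq c_def)
      then show ?thesis using mu_nonneg[of "-1"] by (simp add: r_def max_def)
    qed
    have D_eq: "D = r * (a - b)"
      using False by (simp add: D_def LL_eq a_def b_def algebra_simps)
    have lap2: "laplacian qt (\<lambda>(a, b). phi (qmin q) t (gdist q a b)) (x, y) = \<mu> 1 * a - \<mu> (-1) * b"
      using lap by (simp add: a_def b_def algebra_simps)
    have i1: "(\<mu> (-1) - r) * a \<le> (\<mu> (-1) - r) * b" by (rule mult_left_mono) (use ba mur in auto)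
    have i2: "(\<mu> 1 - \<mu> (-1)) * a \<le> 0" by (rule mult_nonpos_nonneg) (use mum a0 in auto)
    show ?thesis using i1 i2 unfolding lap2 D_eq by (simp add: algebra_simps)
  qed
  show ?thesis using deriv ineq by blast
qed

end
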